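(* Let $n\geq 4$ and let $Z\in\mathbb{R}^{n\times 4}$ be totally positive with rows $Z_1,\dots,Z_n$. The algebraic boundary $\partial_a\mathcal{A}_n$ of the amplituhedron $\mathcal{A}_n=\mathcal{A}_n(Z)$ is the union of the following hyperplane sections of $\mathrm{Gr}_{\mathbb{C}}(2,4)$: $\langle AB\,i(i+1)\rangle=0$ for $i=1,\dots,n-1$, and $\langle AB\,1n\rangle=0$.
   Context: A real matrix of rank $k$ with $k$ rows is totally nonnegative (resp. totally positive) if all its maximal minors are $\geq0$ (resp. $>0$) up to a common sign. $\mathrm{Gr}(2,n)_{\geq0}$ is the set of row spans of totally nonnegative $2\times n$ matrices. The amplituhedron $\mathcal{A}_n(Z)\subset\mathrm{Gr}_{\mathbb{R}}(2,4)$ is the image of $\mathrm{Gr}(2,n)_{\geq 0}$ under $\mathrm{rowspan}(X)\mapsto\mathrm{rowspan}(X\cdot Z)$. Lines in $\mathbb{P}^3$ are identified with points of $\mathrm{Gr}(2,4)\subset\mathbb{P}^5$ via Plücker coordinates. For a line $AB$ spanned by vectors $A,B\in\mathbb{C}^4$, $\langle AB\,ij\rangle$ denotes the determinant of the $4\times4$ matrix with rows $A,B,Z_i,Z_j$; it is a linear form in the Plücker coordinates of $AB$, vanishing exactly when the line $AB$ meets the line $Z_iZ_j$. The algebraic boundary $\partial_a\mathcal{A}_n$ is the Zariski closure in $\mathrm{Gr}_{\mathbb{C}}(2,4)$ of the boundary $\mathcal{A}_n\setminus\mathrm{int}(\mathcal{A}_n)$, the interior taken in the Euclidean topology of $\mathrm{Gr}_{\mathbb{R}}(2,4)$.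 *)

theory Defs
  imports "HOL-Analysis.Analysis"
begin

text \<open>2x2 minor (columns i<j) of the 2 x n matrix with rows x1, x2 (columns indexed 1..n).\<close>
definition minor2 :: "(nat \<Rightarrow> real) \<Rightarrow> (nat \<Rightarrow> real) \<Rightarrow> nat \<Rightarrow> nat \<Rightarrow> real" where
  "minor2 x1 x2 i j = x1 i * x2 j - x1 j * x2 i"

text \<open>Totally nonnegative 2 x n matrix: rank 2, all maximal minors >= 0 up to a common sign.\<close>
definition TNN2 :: "nat \<Rightarrow> (nat \<Rightarrow> real) \<Rightarrow> (nat \<Rightarrow> real) \<Rightarrow> bool" where
  "TNN2 n x1 x2 \<longleftrightarrow>
     (\<exists>i j. 1 \<le> i \<and> i < j \<and> j \<le> n \<and> minor2 x1 x2 i j \<noteq> 0) \<and>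
     ((\<forall>i j. 1 \<le> i \<and> i < j \<and> j \<le> n \<longrightarrow> minor2 x1 x2 i j \<ge> 0) \<or>
      (\<forall>i j. 1 \<le> i \<and> i < j \<and> j \<le> n \<longrightarrow> minor2 x1 x2 i j \<le> 0))"

definition det4 :: "'a::comm_ring_1^4 \<Rightarrow> 'a^4 \<Rightarrow> 'a^4 \<Rightarrow> 'a^4 \<Rightarrow> 'a" where
  "det4 a b c d = det (vector [a, b, c, d] :: 'a^4^4)"

text \<open>The n x 4 matrix Z with rows Z 1, ..., Z n is totally positive: all maximal
  (4x4) minors are > 0 up to a common sign (for n >= 4 this forces rank 4).\<close>
definition totally_positive_Z :: "nat \<Rightarrow> (nat \<Rightarrow> real^4) \<Rightarrow> bool" where
  "totally_positive_Z n Z \<longleftrightarrow>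
     (\<forall>a b c d. 1 \<le> a \<and> a < b \<and> b < c \<and> c < d \<and> d \<le> n \<longrightarrow> det4 (Z a) (Z b) (Z c) (Z d) > 0) \<or>
     (\<forall>a b c d. 1 \<le> a \<and> a < b \<and> b < c \<and> c < d \<and> d \<le> n \<longrightarrow> det4 (Z a) (Z b) (Z c) (Z d) < 0)"

definition pl :: "'a::comm_ring_1^4 \<Rightarrow> 'a^4 \<Rightarrow> 'a^6" where
  "pl A B = (let m = (\<lambda>i j. A$i * B$j - A$j * B$i) in
     vector [m 1 2, m 1 3, m 1 4, m 2 3, m 2 4, m 3 4])"

text \<open>Subsets of Grassmannians are represented by their affine cones in Pluecker space
  (with the origin removed).\<close>

definition GrR :: "(real^6) set" where
  "GrR = {pl A B | A B. pl A B \<noteq> 0}"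

definition GrC :: "(complex^6) set" where
  "GrC = {pl A B | A B. pl A B \<noteq> 0}"

definition cvec :: "real^'n \<Rightarrow> complex^'n" where
  "cvec v = (\<chi> i. complex_of_real (v $ i))"

definition amplituhedron :: "nat \<Rightarrow> (nat \<Rightarrow> real^4) \<Rightarrow> (real^6) set" where
  "amplituhedron n Z =
     {pl (\<Sum>i=1..n. x1 i *\<^sub>R Z i) (\<Sum>i=1..n. x2 i *\<^sub>R Z i) | x1 x2.
        TNN2 n x1 x2 \<and> pl (\<Sum>i=1..n. x1 i *\<^sub>R Z i) (\<Sum>i=1..n. x2 i *\<^sub>R Z i) \<noteq> 0}"

definition euclid_boundary :: "(real^6) set \<Rightarrow> (real^6) set" where
  "euclid_boundary S = S - ((top_of_set GrR) interior_of S)"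

inductive_set poly_fun :: "(complex^6 \<Rightarrow> complex) set" where
  pf_const: "(\<lambda>p. c) \<in> poly_fun"
| pf_coord: "(\<lambda>p. p $ i) \<in> poly_fun"
| pf_add: "f \<in> poly_fun \<Longrightarrow> g \<in> poly_fun \<Longrightarrow> (\<lambda>p. f p + g p) \<in> poly_fun"
| pf_mult: "f \<in> poly_fun \<Longrightarrow> g \<in> poly_fun \<Longrightarrow> (\<lambda>p. f p * g p) \<in> poly_fun"

definition homog_poly :: "(complex^6 \<Rightarrow> complex) \<Rightarrow> bool" where
  "homog_poly f \<longleftrightarrow> f \<in> poly_fun \<and> (\<exists>d::nat. \<forall>c p. f (c *s p) = c ^ d * f p)"

definition zariski_closed_Gr :: "(complex^6) set \<Rightarrow> bool" where
  "zariski_closed_Gr T \<longleftrightarrow> (\<exists>F. (\<forall>f\<in>F. homog_poly f) \<and> T = {p \<in> GrC. \<forall>f\<in>F. f p = 0})"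

definition zariski_closure_Gr :: "(complex^6) set \<Rightarrow> (complex^6) set" where
  "zariski_closure_Gr S = \<Inter>{T. zariski_closed_Gr T \<and> S \<subseteq> T}"

definition algebraic_boundary :: "nat \<Rightarrow> (nat \<Rightarrow> real^4) \<Rightarrow> (complex^6) set" where
  "algebraic_boundary n Z = zariski_closure_Gr (cvec ` euclid_boundary (amplituhedron n Z))"

definition bracket_section :: "(nat \<Rightarrow> real^4) \<Rightarrow> nat \<Rightarrow> nat \<Rightarrow> (complex^6) set" where
  "bracket_section Z i j =
     {pl A B | A B. pl A B \<noteq> 0 \<and> det4 A B (cvec (Z i)) (cvec (Z j)) = 0}"

end

theory Submission
  imports Defs "HOL-Computational_Algebra.Polynomial"
begin



lemma vector_4 [simp]:
 "(vector [x,y,z,w] ::('a::zero)^4)$1 = x"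
 "(vector [x,y,z,w] ::('a::zero)^4)$2 = y"
 "(vector [x,y,z,w] ::('a::zero)^4)$3 = z"
 "(vector [x,y,z,w] ::('a::zero)^4)$4 = w"
  unfolding vector_def by simp_all

lemma vector_6 [simp]:
 "(vector [x1,x2,x3,x4,x5,x6] ::('a::zero)^6)$1 = x1"
 "(vector [x1,x2,x3,x4,x5,x6] ::('a::zero)^6)$2 = x2"
 "(vector [x1,x2,x3,x4,x5,x6] ::('a::zero)^6)$3 = x3"
 "(vector [x1,x2,x3,x4,x5,x6] ::('a::zero)^6)$4 = x4"
 "(vector [x1,x2,x3,x4,x5,x6] ::('a::zero)^6)$5 = x5"
 "(vector [x1,x2,x3,x4,x5,x6] ::('a::zero)^6)$6 = x6"
  unfolding vector_def by simp_all

lemma exhaust_6: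
  fixes x :: 6
  shows "x = 1 \<or> x = 2 \<or> x = 3 \<or> x = 4 \<or> x = 5 \<or> x = 6"
proof (induct x)
  case (of_int z)
  then have "z = 0 \<or> z = 1 \<or> z = 2 \<or> z = 3 \<or> z = 4 \<or> z = 5" by fastforce
  then show ?case by auto
qed

lemma forall_6: "(\<forall>i::6. P i) \<longleftrightarrow> P 1 \<and> P 2 \<and> P 3 \<and> P 4 \<and> P 5 \<and> P 6"
  by (metis exhaust_6)

lemma det_4:
  "det (A::'a::comm_ring_1^4^4) =
   A$1$1*A$2$2*A$3$3*A$4$4 - A$1$1*A$2$2*A$3$4*A$4$3 - A$1$1*A$2$3*A$3$2*A$4$4
 + A$1$1*A$2$3*A$3$4*A$4$2 + A$1$1*A$2$4*A$3$2*A$4$3 - A$1$1*A$2$4*A$3$3*A$4$2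
 - A$1$2*A$2$1*A$3$3*A$4$4 + A$1$2*A$2$1*A$3$4*A$4$3 + A$1$2*A$2$3*A$3$1*A$4$4
 - A$1$2*A$2$3*A$3$4*A$4$1 - A$1$2*A$2$4*A$3$1*A$4$3 + A$1$2*A$2$4*A$3$3*A$4$1
 + A$1$3*A$2$1*A$3$2*A$4$4 - A$1$3*A$2$1*A$3$4*A$4$2 - A$1$3*A$2$2*A$3$1*A$4$4
 + A$1$3*A$2$2*A$3$4*A$4$1 + A$1$3*A$2$4*A$3$1*A$4$2 - A$1$3*A$2$4*A$3$2*A$4$1
 - A$1$4*A$2$1*A$3$2*A$4$3 + A$1$4*A$2$1*A$3$3*A$4$2 + A$1$4*A$2$2*A$3$1*A$4$3
 - A$1$4*A$2$2*A$3$3*A$4$1 - A$1$4*A$2$3*A$3$1*A$4$2 + A$1$4*A$2$3*A$3$2*A$4$1"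
proof -
  have f1: "finite {2::4, 3, 4}" "1 \<notin> {2::4, 3, 4}" by auto
  have f2: "finite {3::4, 4}" "2 \<notin> {3::4, 4}" by auto
  have f3: "finite {4::4}" "3 \<notin> {4::4}" by auto
  show ?thesis
    unfolding det_def UNIV_4
    unfolding sum_over_permutations_insert[OF f1]
    unfolding sum_over_permutations_insert[OF f2]
    unfolding sum_over_permutations_insert[OF f3]
    unfolding permutes_sing
    by (simp add: sign_swap_id permutation_swap_id permutation_compose sign_compose sign_id swap_id_eq algebra_simps)
qed




lemma det4_expand: "det4 a b c d =
  a$1*b$2*c$3*d$4 - a$1*b$2*c$4*d$3 - a$1*b$3*c$2*d$4 + a$1*b$3*c$4*d$2 + a$1*b$4*c$2*d$3 - a$1*b$4*c$3*d$2 - a$2*b$1*c$3*d$4 + a$2*b$1*c$4*d$3 + a$2*b$3*c$1*d$4 - a$2*b$3*c$4*d$1 - a$2*b$4*c$1*d$3 + a$2*b$4*c$3*d$1 + a$3*b$1*c$2*d$4 - a$3*b$1*c$4*d$2 - a$3*b$2*c$1*d$4 + a$3*b$2*c$4*d$1 + a$3*b$4*c$1*d$2 - a$3*b$4*c$2*d$1 - a$4*b$1*c$2*d$3 + a$4*b$1*c$3*d$2 + a$4*b$2*c$1*d$3 - a$4*b$2*c$3*d$1 - a$4*b$3*c$1*d$2 + a$4*b$3*c$2*d$1"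
  unfolding det4_def det_4 by (simp add: algebra_simps)

lemma cramer5:
  fixes P1 P2 P3 P4 P5 :: "'a::comm_ring_1^4"
  shows "det4 P2 P3 P4 P5 *s P1 - det4 P1 P3 P4 P5 *s P2 + det4 P1 P2 P4 P5 *s P3
        - det4 P1 P2 P3 P5 *s P4 + det4 P1 P2 P3 P4 *s P5 = 0"
  unfolding vec_eq_iff forall_4 det4_expand
  by (simp add: vector_scalar_mult_def algebra_simps)




lemma scaleR_eq_smult: "(c::real) *\<^sub>R (v::real^'n) = c *s v"
  by (simp add: vec_eq_iff)


lemma det4_add1: "det4 (a + a') b c d = det4 a b c d + det4 a' b c d"
  unfolding det4_expand by (simp add: algebra_simps)
lemma det4_add2: "det4 a (b + b') c d = det4 a b c d + det4 a b' c d"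
  unfolding det4_expand by (simp add: algebra_simps)
lemma det4_add3: "det4 a b (c + c') d = det4 a b c d + det4 a b c' d"
  unfolding det4_expand by (simp add: algebra_simps)
lemma det4_add4: "det4 a b c (d + d') = det4 a b c d + det4 a b c d'"
  unfolding det4_expand by (simp add: algebra_simps)
lemma det4_diff1: "det4 (a - a') b c d = det4 a b c d - det4 a' b c d"
  unfolding det4_expand by (simp add: algebra_simps)
lemma det4_diff2: "det4 a (b - b') c d = det4 a b c d - det4 a b' c d"
  unfolding det4_expand by (simp add: algebra_simps)
lemma det4_diff3: "det4 a b (c - c') d = det4 a b c d - det4 a b c' d"
  unfolding det4_expand by (simp add: algebra_simps)
lemma det4_diff4: "det4 a b c (d - d') = det4 a b c d - det4 a b c d'"
  unfolding det4_expand by (simp add: algebra_simps)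
lemma det4_smult1: "det4 (k *s a) b c d = k * det4 a b c d"
  unfolding det4_expand by (simp add: algebra_simps)
lemma det4_smult2: "det4 a (k *s b) c d = k * det4 a b c d"
  unfolding det4_expand by (simp add: algebra_simps)
lemma det4_smult3: "det4 a b (k *s c) d = k * det4 a b c d"
  unfolding det4_expand by (simp add: algebra_simps)
lemma det4_smult4: "det4 a b c (k *s d) = k * det4 a b c d"
  unfolding det4_expand by (simp add: algebra_simps)
lemma det4_neg1: "det4 (- a) b c d = - det4 a b c d"
  unfolding det4_expand by (simp add: algebra_simps)
lemma det4_neg2: "det4 a (- b) c d = - det4 a b c d"
  unfolding det4_expand by (simp add: algebra_simps)
lemma det4_neg3: "det4 a b (- c) d = - det4 a b c d"
  unfolding det4_expand by (simp add: algebra_simps)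
lemma det4_neg4: "det4 a b c (- d) = - det4 a b c d"
  unfolding det4_expand by (simp add: algebra_simps)
lemma det4_zero: "det4 0 b c d = 0" "det4 a 0 c d = 0" "det4 a b 0 d = 0" "det4 a b c 0 = 0"
  unfolding det4_expand by simp_all

lemma det4_rep:
  "det4 a a c d = 0" "det4 a b a d = 0" "det4 a b c a = 0"
  "det4 a b b d = 0" "det4 a b c b = 0" "det4 a b c c = 0"
  unfolding det4_expand by (simp_all add: algebra_simps)

lemmas d4 = det4_add1 det4_add2 det4_add3 det4_add4 det4_diff1 det4_diff2 det4_diff3 det4_diff4 det4_smult1 det4_smult2 det4_smult3 det4_smult4 det4_neg1 det4_neg2 det4_neg3 det4_neg4 det4_zero det4_rep

lemma det4_swap12: "det4 a b c d = - det4 b a c d"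
  unfolding det4_expand by (simp add: algebra_simps)
lemma det4_swap23: "det4 a b c d = - det4 a c b d"
  unfolding det4_expand by (simp add: algebra_simps)
lemma det4_swap34: "det4 a b c d = - det4 a b d c"
  unfolding det4_expand by (simp add: algebra_simps)
lemma det4_pairs: "det4 a b c d = det4 c d a b"
  unfolding det4_expand by (simp add: algebra_simps)

lemma det4_sum1: "det4 (\<Sum>i\<in>S. f i) b c d = (\<Sum>i\<in>S. det4 (f i) b c d)"
  by (induction S rule: infinite_finite_induct) (simp_all add: d4)
lemma det4_sum2: "det4 a (\<Sum>i\<in>S. f i) c d = (\<Sum>i\<in>S. det4 a (f i) c d)"
  by (induction S rule: infinite_finite_induct) (simp_all add: d4)
lemma det4_sum3: "det4 a b (\<Sum>i\<in>S. f i) d = (\<Sum>i\<in>S. det4 a b (f i) d)"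
  by (induction S rule: infinite_finite_induct) (simp_all add: d4)
lemma det4_sum4: "det4 a b c (\<Sum>i\<in>S. f i) = (\<Sum>i\<in>S. det4 a b c (f i))"
  by (induction S rule: infinite_finite_induct) (simp_all add: d4)

definition brk :: "'a::comm_ring_1^6 \<Rightarrow> 'a^4 \<Rightarrow> 'a^4 \<Rightarrow> 'a" where
  "brk p C D = (let q = pl C D in
     p$1 * q$6 - p$2 * q$5 + p$3 * q$4 + p$4 * q$3 - p$5 * q$2 + p$6 * q$1)"

lemma det4_pl: "det4 A B C D = brk (pl A B) C D"
  unfolding det4_expand brk_def pl_def Let_def by (simp add: algebra_simps)

lemma brk_add: "brk (p + p') C D = brk p C D + brk p' C D"
  unfolding brk_def Let_def by (simp add: algebra_simps)
lemma brk_smult: "brk (k *s p) C D = k * brk p C D"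
  unfolding brk_def Let_def by (simp add: algebra_simps)
lemma brk_zero: "brk 0 C D = 0"
  unfolding brk_def Let_def by simp

lemma pl_add1: "pl (A + A') B = pl A B + pl A' B"
  unfolding pl_def Let_def vec_eq_iff forall_6 by (simp add: algebra_simps)
lemma pl_smult1: "pl (k *s A) B = k *s pl A B"
  unfolding pl_def Let_def vec_eq_iff forall_6 by (simp add: algebra_simps)
lemma pl_antisym: "pl A B = - pl B A"
  unfolding pl_def Let_def vec_eq_iff forall_6 by (simp add: algebra_simps)
lemma pl_comb: "pl (a *s A + b *s B) (c *s A + d *s B) = (a*d - b*c) *s pl A B"
  unfolding pl_def Let_def vec_eq_iff forall_6 by (simp add: algebra_simps)
lemma pl_self: "pl A A = 0"
  unfolding pl_def Let_def vec_eq_iff forall_6 by (simp add: algebra_simps)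

lemma pl_nonzero_if_brk: "brk (pl A B) C D \<noteq> 0 \<Longrightarrow> pl A B \<noteq> 0"
  using brk_zero by metis

lemma plucker3:
  fixes A B P Q R S :: "'a::comm_ring_1^4"
  shows "det4 A B P Q * det4 A B R S - det4 A B P R * det4 A B Q S + det4 A B P S * det4 A B Q R = 0"
proof -
  have "det4 A B (det4 B P Q R *s A - det4 A P Q R *s B + det4 A B Q R *s P
        - det4 A B P R *s Q + det4 A B P Q *s R) S = det4 A B 0 S"
    using cramer5[of B P Q R A] by simp
  then show ?thesis
    by (simp add: d4 algebra_simps)
qed




lemma minor2_swap: "minor2 x1 x2 i j = - minor2 x1 x2 j i"
  unfolding minor2_def by simp

lemma minor2_self: "minor2 x1 x2 i i = 0"
  unfolding minor2_def by simp

lemma minor2_2d: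
  assumes "minor2 x1 x2 i q = 0" "minor2 x1 x2 j q = 0" "x1 q \<noteq> 0 \<or> x2 q \<noteq> 0"
  shows "minor2 x1 x2 i j = 0"
proof -
  have e1: "x1 q * minor2 x1 x2 i j = x1 i * minor2 x1 x2 q j - x1 j * minor2 x1 x2 q i"
    unfolding minor2_def by (simp add: algebra_simps)
  have e2: "x2 q * minor2 x1 x2 i j = x2 i * minor2 x1 x2 q j - x2 j * minor2 x1 x2 q i"
    unfolding minor2_def by (simp add: algebra_simps)
  have z: "minor2 x1 x2 q j = 0" "minor2 x1 x2 q i = 0"
    using assms(1,2) minor2_swap[of x1 x2] by (metis neg_equal_0_iff_equal)+
  show ?thesis using e1 e2 z assms(3) by auto
qed

lemma TNN2_sign:
  assumes "TNN2 n x1 x2"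
  obtains \<rho> :: real where "\<rho> = 1 \<or> \<rho> = -1"
    "\<And>i j. 1 \<le> i \<Longrightarrow> i < j \<Longrightarrow> j \<le> n \<Longrightarrow> \<rho> * minor2 x1 x2 i j \<ge> 0"
proof -
  from assms have "(\<forall>i j. 1 \<le> i \<and> i < j \<and> j \<le> n \<longrightarrow> minor2 x1 x2 i j \<ge> 0) \<or>
      (\<forall>i j. 1 \<le> i \<and> i < j \<and> j \<le> n \<longrightarrow> minor2 x1 x2 i j \<le> 0)"
    unfolding TNN2_def by blast
  then show ?thesis
  proof
    assume h: "\<forall>i j. 1 \<le> i \<and> i < j \<and> j \<le> n \<longrightarrow> minor2 x1 x2 i j \<ge> 0"
    show ?thesis by (rule that[of 1]) (use h in auto)
  next
    assume h: "\<forall>i j. 1 \<le> i \<and> i < j \<and> j \<le> n \<longrightarrow> minor2 x1 x2 i j \<le> 0"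
    show ?thesis by (rule that[of "-1"]) (use h in auto)
  qed
qed

lemma GK:
  fixes u x1 x2 :: "nat \<Rightarrow> real"
  assumes tnn: "TNN2 n x1 x2"
    and s1: "(\<Sum>k=1..n. u k * x1 k) = 0" and s2: "(\<Sum>k=1..n. u k * x2 k) = 0"
    and mn: "m \<le> n"
    and pos: "\<And>k. 1 \<le> k \<Longrightarrow> k \<le> m \<Longrightarrow> u k > 0"
    and neg: "\<And>k. m < k \<Longrightarrow> k \<le> n \<Longrightarrow> u k < 0"
  shows False
proof -
  obtain \<rho> :: real where rho: "\<rho> = 1 \<or> \<rho> = -1"
    and rhom: "\<And>i j. 1 \<le> i \<Longrightarrow> i < j \<Longrightarrow> j \<le> n \<Longrightarrow> \<rho> * minor2 x1 x2 i j \<ge> 0"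
    using TNN2_sign[OF tnn] by blast
  have key: "(\<Sum>k=1..n. u k * minor2 x1 x2 k q) = 0" for q
  proof -
    have "(\<Sum>k=1..n. u k * minor2 x1 x2 k q) =
          x2 q * (\<Sum>k=1..n. u k * x1 k) - x1 q * (\<Sum>k=1..n. u k * x2 k)"
      unfolding minor2_def sum_distrib_left sum_subtractf[symmetric]
      by (rule sum.cong) (auto simp: algebra_simps)
    then show ?thesis using s1 s2 by simp
  qed
  define NZ where "NZ = {k\<in>{1..n}. x1 k \<noteq> 0 \<or> x2 k \<noteq> 0}"
  have finNZ: "finite NZ" unfolding NZ_def by simp
  have NZne: "NZ \<noteq> {}"
  proof
    assume "NZ = {}"
    then have "\<forall>k\<in>{1..n}. x1 k = 0 \<and> x2 k = 0" unfolding NZ_def by auto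
    then have "\<forall>i j. 1 \<le> i \<and> i < j \<and> j \<le> n \<longrightarrow> minor2 x1 x2 i j = 0"
      unfolding minor2_def by auto
    then show False using tnn unfolding TNN2_def by blast
  qed
  obtain q where qNZ: "q \<in> NZ" and
    qprop: "\<And>k. k \<in> {1..n} \<Longrightarrow> k \<noteq> q \<Longrightarrow> u k * (\<rho> * minor2 x1 x2 k q) \<ge> 0"
  proof (cases "NZ \<inter> {1..m} = {}")
    case False
    define q where "q = Max (NZ \<inter> {1..m})"
    have qin: "q \<in> NZ \<inter> {1..m}" unfolding q_def using False finNZ by (intro Max_in) auto
    have qmax: "k \<in> NZ \<inter> {1..m} \<Longrightarrow> k \<le> q" for k unfolding q_def using finNZ by auto
    show ?thesis
    proof (rule that[of q])
      show "q \<in> NZ" using qin by auto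
      fix k assume k: "k \<in> {1..n}" "k \<noteq> q"
      consider "k < q" | "q < k \<and> k \<le> m" | "m < k" using k by linarith
      then show "u k * (\<rho> * minor2 x1 x2 k q) \<ge> 0"
      proof cases
        case 1
        have "u k > 0" using pos[of k] 1 k qin by auto
        moreover have "\<rho> * minor2 x1 x2 k q \<ge> 0" using rhom[of k q] 1 k qin unfolding NZ_def by auto
        ultimately show ?thesis by simp
      next
        case 2
        then have "k \<notin> NZ" using qmax[of k] k by auto
        then have "x1 k = 0" "x2 k = 0" using k unfolding NZ_def by auto
        then show ?thesis unfolding minor2_def by simp
      next
        case 3
        have "u k < 0" using neg[of k] 3 k by auto
        moreover have "\<rho> * minor2 x1 x2 q k \<ge> 0" using rhom[of q k] 3 k qin unfolding NZ_def by auto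
        ultimately show ?thesis using minor2_swap[of x1 x2 k q]
          by (simp add: mult_nonpos_nonneg)
      qed
    qed
  next
    case True
    define q where "q = Min NZ"
    have qin: "q \<in> NZ" unfolding q_def using NZne finNZ by (intro Min_in) auto
    have qmin: "k \<in> NZ \<Longrightarrow> q \<le> k" for k unfolding q_def using finNZ by auto
    have qm: "m < q" using True qin unfolding NZ_def by auto
    show ?thesis
    proof (rule that[of q])
      show "q \<in> NZ" using qin by auto
      fix k assume k: "k \<in> {1..n}" "k \<noteq> q"
      consider "k \<le> m" | "m < k \<and> k < q" | "q < k" using k by linarith
      then show "u k * (\<rho> * minor2 x1 x2 k q) \<ge> 0"
      proof cases
        case 1
        then have "k \<notin> NZ" using True k by auto
        then have "x1 k = 0" "x2 k = 0" using k unfolding NZ_def by auto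
        then show ?thesis unfolding minor2_def by simp
      next
        case 2
        then have "k \<notin> NZ" using qmin[of k] by auto
        then have "x1 k = 0" "x2 k = 0" using k unfolding NZ_def by auto
        then show ?thesis unfolding minor2_def by simp
      next
        case 3
        have "u k < 0" using neg[of k] 3 k qm by auto
        moreover have "\<rho> * minor2 x1 x2 q k \<ge> 0" using rhom[of q k] 3 k qin unfolding NZ_def by auto
        ultimately show ?thesis using minor2_swap[of x1 x2 k q]
          by (simp add: mult_nonpos_nonneg)
      qed
    qed
  qed
  have allnn: "\<forall>k\<in>{1..n}. u k * (\<rho> * minor2 x1 x2 k q) \<ge> 0"
    using qprop by (metis minor2_self mult_zero_right order_refl)
  have "(\<Sum>k=1..n. u k * (\<rho> * minor2 x1 x2 k q)) = \<rho> * (\<Sum>k=1..n. u k * minor2 x1 x2 k q)"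
    by (simp add: sum_distrib_left algebra_simps)
  also have "\<dots> = 0" using key by simp
  finally have "\<forall>k\<in>{1..n}. u k * (\<rho> * minor2 x1 x2 k q) = 0"
    using sum_nonneg_eq_0_iff[of "{1..n}" "\<lambda>k. u k * (\<rho> * minor2 x1 x2 k q)"] allnn by simp
  moreover have "\<forall>k\<in>{1..n}. u k \<noteq> 0"
    using pos neg by (metis atLeastAtMost_iff less_irrefl not_le)
  ultimately have mz: "\<forall>k\<in>{1..n}. minor2 x1 x2 k q = 0" using rho by auto
  have vq: "x1 q \<noteq> 0 \<or> x2 q \<noteq> 0" using qNZ unfolding NZ_def by auto
  have "\<forall>i j. 1 \<le> i \<and> i < j \<and> j \<le> n \<longrightarrow> minor2 x1 x2 i j = 0"
    using mz vq minor2_2d[of x1 x2 _ q] by auto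
  then show False using tnn unfolding TNN2_def by blast
qed




lemma det4_perm_a: "det4 a b c d = det4 a c d b"
  unfolding det4_expand by (simp add: algebra_simps)
lemma det4_perm_b: "det4 a b c d = det4 c a b d"
  unfolding det4_expand by (simp add: algebra_simps)
lemma det4_perm_c: "det4 a b c d = - det4 c a d b"
  unfolding det4_expand by (simp add: algebra_simps)

lemma antisym_sum:
  fixes S :: "nat set" and K :: "nat \<Rightarrow> nat \<Rightarrow> 'a::comm_ring_1"
  assumes fin: "finite S" and K: "\<And>p q. K q p = - K p q" and Kd: "\<And>p. K p p = 0"
  shows "(\<Sum>p\<in>S. \<Sum>q\<in>S. a p * b q * K p q) =
         (\<Sum>p\<in>S. \<Sum>q\<in>{q\<in>S. p < q}. (a p * b q - a q * b p) * K p q)"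
proof -
  let ?f = "\<lambda>p q. a p * b q * K p q"
  have split: "(\<Sum>q\<in>S. ?f p q) = (\<Sum>q\<in>{q\<in>S. p < q}. ?f p q) + (\<Sum>q\<in>{q\<in>S. q < p}. ?f p q)" for p
  proof -
    have "(\<Sum>q\<in>S. ?f p q) = (\<Sum>q\<in>S. (if p < q then ?f p q else 0) + (if q < p then ?f p q else 0))"
      by (rule sum.cong) (auto simp: Kd)
    also have "\<dots> = (\<Sum>q\<in>{q\<in>S. p < q}. ?f p q) + (\<Sum>q\<in>{q\<in>S. q < p}. ?f p q)"
      by (simp add: sum.distrib sum.inter_filter fin)
    finally show ?thesis .
  qed
  have sw: "(\<Sum>p\<in>S. \<Sum>q\<in>{q\<in>S. q < p}. ?f p q) = (\<Sum>q\<in>S. \<Sum>p\<in>{p\<in>S. q < p}. ?f p q)"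
    by (rule sum.swap_restrict[OF fin fin])
  have "(\<Sum>p\<in>S. \<Sum>q\<in>S. ?f p q) = (\<Sum>p\<in>S. \<Sum>q\<in>{q\<in>S. p < q}. ?f p q) + (\<Sum>q\<in>S. \<Sum>p\<in>{p\<in>S. q < p}. ?f p q)"
    by (simp add: split sum.distrib sw)
  also have "(\<Sum>q\<in>S. \<Sum>p\<in>{p\<in>S. q < p}. ?f p q) = (\<Sum>p\<in>S. \<Sum>q\<in>{q\<in>S. p < q}. - (a q * b p * K p q))"
    by (intro sum.cong refl) (metis K minus_minus mult_minus_right)
  also have "(\<Sum>p\<in>S. \<Sum>q\<in>{q\<in>S. p < q}. ?f p q) + (\<Sum>p\<in>S. \<Sum>q\<in>{q\<in>S. p < q}. - (a q * b p * K p q))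
      = (\<Sum>p\<in>S. \<Sum>q\<in>{q\<in>S. p < q}. ?f p q + - (a q * b p * K p q))"
    by (simp only: sum.distrib[symmetric])
  also have "\<dots> = (\<Sum>p\<in>S. \<Sum>q\<in>{q\<in>S. p < q}. (a p * b q - a q * b p) * K p q)"
    by (intro sum.cong refl) (simp add: algebra_simps)
  finally show ?thesis .
qed

locale ampl =
  fixes n :: nat and Z :: "nat \<Rightarrow> real^4" and \<sigma> :: real
  assumes n4: "n \<ge> 4" and sig: "\<sigma> = 1 \<or> \<sigma> = -1"
    and tp: "\<And>a b c d. 1 \<le> a \<Longrightarrow> a < b \<Longrightarrow> b < c \<Longrightarrow> c < d \<Longrightarrow> d \<le> n \<Longrightarrow>
              \<sigma> * det4 (Z a) (Z b) (Z c) (Z d) > 0"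
begin

definition XA :: "(nat \<Rightarrow> real) \<Rightarrow> real^4" where
  "XA x = (\<Sum>i=1..n. x i *\<^sub>R Z i)"

definition cyc :: "nat \<Rightarrow> nat \<Rightarrow> bool" where
  "cyc r s \<longleftrightarrow> (1 \<le> r \<and> r < n \<and> s = r + 1) \<or> (r = 1 \<and> s = n)"

lemma ampl_eq: "amplituhedron n Z = {pl (XA x1) (XA x2) | x1 x2. TNN2 n x1 x2 \<and> pl (XA x1) (XA x2) \<noteq> 0}"
  unfolding amplituhedron_def XA_def by simp

lemma XA_smult: "XA x = (\<Sum>i=1..n. x i *s Z i)"
  unfolding XA_def scaleR_eq_smult by simp

lemma expansion:
  "det4 (XA x1) (XA x2) C E =
   (\<Sum>p\<in>{1..n}. \<Sum>q\<in>{q\<in>{1..n}. p < q}. minor2 x1 x2 p q * det4 (Z p) (Z q) C E)"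
proof -
  have "det4 (XA x1) (XA x2) C E = (\<Sum>p\<in>{1..n}. \<Sum>q\<in>{1..n}. x1 p * x2 q * det4 (Z p) (Z q) C E)"
    unfolding XA_smult det4_sum1 det4_sum2 by (simp add: d4 sum_distrib_left algebra_simps) (rule sum.swap)
  also have "\<dots> = (\<Sum>p\<in>{1..n}. \<Sum>q\<in>{q\<in>{1..n}. p < q}. (x1 p * x2 q - x1 q * x2 p) * det4 (Z p) (Z q) C E)"
    by (rule antisym_sum) (simp, rule det4_swap12, simp add: d4)
  finally show ?thesis unfolding minor2_def .
qed

lemma D_cyc_nonneg:
  assumes c: "cyc r s" and pq: "1 \<le> p" "p < q" "q \<le> n"
  shows "\<sigma> * det4 (Z p) (Z q) (Z r) (Z s) \<ge> 0"
proof (cases "p = r \<or> p = s \<or> q = r \<or> q = s")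
  case True
  then consider "p = r" | "p = s" | "q = r" | "q = s" by blast
  then show ?thesis by cases (simp_all add: det4_rep)
next
  case False
  from c show ?thesis unfolding cyc_def
  proof
    assume h: "1 \<le> r \<and> r < n \<and> s = r + 1"
    consider "q < r" | "p < r \<and> s < q" | "s < p" using False h pq by linarith
    then show ?thesis
    proof cases
      case 1
      have "1 \<le> p" "p < q" "q < r" "r < s" "s \<le> n" using 1 h pq by auto
      from tp[OF this] show ?thesis by simp
    next
      case 2
      have "1 \<le> p" "p < r" "r < s" "s < q" "q \<le> n" using 2 h pq by auto
      from tp[OF this] show ?thesis by (simp add: det4_perm_a[of "Z p" "Z q" "Z r" "Z s"])
    next
      case 3
      have "1 \<le> r" "r < s" "s < p" "p < q" "q \<le> n" using 3 h pq by auto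
      from tp[OF this] show ?thesis by (simp add: det4_pairs[of "Z p" "Z q" "Z r" "Z s"])
    qed
  next
    assume h: "r = 1 \<and> s = n"
    have "(1::nat) \<le> 1" "1 < p" "p < q" "q < n" "n \<le> n" using False pq h by auto
    from tp[OF this] show ?thesis using h det4_perm_b[of "Z p" "Z q" "Z 1" "Z n"] by simp
  qed
qed

lemma A_sign:
  assumes "p \<in> amplituhedron n Z"
  obtains \<rho> :: real where "\<rho> = 1 \<or> \<rho> = -1" "\<And>r s. cyc r s \<Longrightarrow> \<rho> * brk p (Z r) (Z s) \<ge> 0"
proof -
  obtain x1 x2 where p: "p = pl (XA x1) (XA x2)" and tnn: "TNN2 n x1 x2"
    using assms unfolding ampl_eq by blast
  obtain \<rho> :: real where rho: "\<rho> = 1 \<or> \<rho> = -1"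
    and rhom: "\<And>i j. 1 \<le> i \<Longrightarrow> i < j \<Longrightarrow> j \<le> n \<Longrightarrow> \<rho> * minor2 x1 x2 i j \<ge> 0"
    using TNN2_sign[OF tnn] by blast
  show ?thesis
  proof (rule that[of "\<rho> * \<sigma>"])
    show "\<rho> * \<sigma> = 1 \<or> \<rho> * \<sigma> = -1" using rho sig by auto
    fix r s assume c: "cyc r s"
    have "\<rho> * \<sigma> * brk p (Z r) (Z s) =
      (\<Sum>i\<in>{1..n}. \<Sum>j\<in>{j\<in>{1..n}. i < j}. (\<rho> * minor2 x1 x2 i j) * (\<sigma> * det4 (Z i) (Z j) (Z r) (Z s)))"
      unfolding p det4_pl[symmetric] expansion sum_distrib_left
      by (intro sum.cong refl) (simp add: ac_simps)
    also have "\<dots> \<ge> 0"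
    proof (intro sum_nonneg)
      fix i j assume i: "i \<in> {1..n}" and j: "j \<in> {j \<in> {1..n}. i < j}"
      show "0 \<le> \<rho> * minor2 x1 x2 i j * (\<sigma> * det4 (Z i) (Z j) (Z r) (Z s))"
        using rhom[of i j] D_cyc_nonneg[OF c, of i j] i j by simp
    qed
    finally show "\<rho> * \<sigma> * brk p (Z r) (Z s) \<ge> 0" .
  qed
qed

end



context ampl begin

lemma cyc_12: "cyc 1 2" using n4 unfolding cyc_def by auto
lemma cyc_1n: "cyc 1 n" unfolding cyc_def by auto
lemma cyc_succ: "1 \<le> j \<Longrightarrow> j < n \<Longrightarrow> cyc j (j+1)" unfolding cyc_def by auto

lemma nec:
  assumes tnn: "TNN2 n x1 x2" and tau: "\<tau> = 1 \<or> \<tau> = -1"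
    and cycpos: "\<And>r s. cyc r s \<Longrightarrow> \<tau> * det4 (XA x1) (XA x2) (Z r) (Z s) > 0"
  shows "\<exists>j\<in>{2..n}. \<tau> * det4 (XA x1) (XA x2) (Z 1) (Z j) < 0"
proof (rule ccontr)
  define A where "A = XA x1"
  define B where "B = XA x2"
  define b where "b k l = det4 A B (Z k) (Z l)" for k l
  have cp: "\<And>r s. cyc r s \<Longrightarrow> \<tau> * b r s > 0" using cycpos unfolding b_def A_def B_def by blast
  have tt: "\<tau> * \<tau> = 1" using tau by auto
  assume "\<not> (\<exists>j\<in>{2..n}. \<tau> * det4 (XA x1) (XA x2) (Z 1) (Z j) < 0)"
  then have hn: "\<And>j. j \<in> {2..n} \<Longrightarrow> \<tau> * b 1 j \<ge> 0" unfolding b_def A_def B_def by (simp add: not_less)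
  have nz: "b 1 j \<noteq> 0" if j: "3 \<le> j" "j \<le> n - 1" for j
  proof
    assume z: "b 1 j = 0"
    have e1: "b 1 (j+1) * b j 2 = b 1 2 * b j (j+1)"
      using plucker3[of A B "Z 1" "Z j" "Z 2" "Z (j+1)"] z unfolding b_def by (simp add: algebra_simps)
    have e2: "b 1 (j-1) * b j 2 = b 1 2 * b j (j-1)"
      using plucker3[of A B "Z 1" "Z j" "Z 2" "Z (j-1)"] z unfolding b_def by (simp add: algebra_simps)
    have sw: "b j (j-1) = - b (j-1) j" unfolding b_def by (rule det4_swap34)
    have c1: "\<tau> * b 1 2 > 0" using cp[OF cyc_12] .
    have c2: "\<tau> * b j (j+1) > 0" using cp[OF cyc_succ[of j]] j by auto
    have c3: "\<tau> * b (j-1) j > 0" using cp[OF cyc_succ[of "j-1"]] j by auto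
    have p1: "b 1 2 * b j (j+1) > 0"
      using c1 c2 tau by (auto intro: mult_pos_pos mult_neg_neg)
    have p2: "b 1 2 * b (j-1) j > 0"
      using c1 c3 tau by (auto intro: mult_pos_pos mult_neg_neg)
    have "(b 1 (j+1) * b j 2) * (b 1 (j-1) * b j 2) < 0"
      using e1 e2 sw p1 p2 by (simp add: mult_pos_neg)
    moreover have "(b 1 (j+1) * b j 2) * (b 1 (j-1) * b j 2) = (\<tau> * b 1 (j+1)) * (\<tau> * b 1 (j-1)) * (b j 2)\<^sup>2"
      using tau by (auto simp: algebra_simps power2_eq_square)
    moreover have "(\<tau> * b 1 (j+1)) * (\<tau> * b 1 (j-1)) * (b j 2)\<^sup>2 \<ge> 0"
    proof -
      have "j+1 \<in> {2..n}" "j-1 \<in> {2..n}" using j by auto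
      then have "\<tau> * b 1 (j+1) \<ge> 0" "\<tau> * b 1 (j-1) \<ge> 0" using hn by blast+
      then show ?thesis by (metis mult_nonneg_nonneg zero_le_power2)
    qed
    ultimately show False by linarith
  qed
  have pos: "\<tau> * b 1 k > 0" if k: "k \<in> {2..n}" for k
  proof -
    consider "k = 2" | "k = n" | "3 \<le> k \<and> k \<le> n - 1" using k by force
    then show ?thesis
    proof cases
      case 1 then show ?thesis using cp[OF cyc_12] by simp
    next
      case 2 then show ?thesis using cp[OF cyc_1n] by simp
    next
      case 3 then show ?thesis using hn[OF k] nz[of k] tau by (auto simp: less_le)
    qed
  qed
  have ev1: "\<forall>\<^sub>F e in at_right (0::real). \<forall>k\<in>{2..n}. \<tau> * (b 1 k + e * b 2 k) > 0"
  proof (rule eventually_ball_finite)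
    show "finite {2..n}" by simp
    show "\<forall>k\<in>{2..n}. \<forall>\<^sub>F e in at_right 0. 0 < \<tau> * (b 1 k + e * b 2 k)"
    proof
      fix k assume k: "k \<in> {2..n}"
      have "((\<lambda>e. \<tau> * (b 1 k + e * b 2 k)) \<longlongrightarrow> \<tau> * (b 1 k + 0 * b 2 k)) (at_right 0)"
        by (intro tendsto_intros)
      then show "\<forall>\<^sub>F e in at_right 0. 0 < \<tau> * (b 1 k + e * b 2 k)"
        using pos[OF k] by (intro order_tendstoD(1)) auto
    qed
  qed
  have "\<forall>\<^sub>F e in at_right (0::real). 0 < e \<and> (\<forall>k\<in>{2..n}. \<tau> * (b 1 k + e * b 2 k) > 0)"
    using ev1 eventually_at_right_less[of "0::real"] by (rule eventually_conj[rotated])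
  then obtain e :: real where e0: "0 < e" and epos: "\<And>k. k\<in>{2..n} \<Longrightarrow> \<tau> * (b 1 k + e * b 2 k) > 0"
    using eventually_happens'[OF trivial_limit_at_right_real] by blast
  define Y where "Y = Z 1 + e *s Z 2"
  define u where "u k = - \<tau> * det4 A B Y (Z k)" for k
  have ub: "u k = - \<tau> * (b 1 k + e * b 2 k)" for k
    unfolding u_def Y_def b_def by (simp add: d4)
  have u1: "u 1 > 0"
  proof -
    have "b 1 1 = 0" "b 2 1 = - b 1 2" unfolding b_def by (simp_all add: d4 det4_swap34[of A B "Z 2"])
    then have "u 1 = e * (\<tau> * b 1 2)" using ub[of 1] by (simp add: algebra_simps)
    then show ?thesis using e0 cp[OF cyc_12] by simp
  qed
  have uk: "u k < 0" if "1 < k" "k \<le> n" for k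
    using epos[of k] that ub[of k] by auto
  have su: "(\<Sum>k=1..n. u k * x k) = - \<tau> * det4 A B Y (XA x)" for x
    unfolding XA_smult det4_sum4 u_def by (simp add: d4 sum_distrib_left algebra_simps)
  have s1: "(\<Sum>k=1..n. u k * x1 k) = 0" using su[of x1] unfolding A_def by (simp add: d4)
  have s2: "(\<Sum>k=1..n. u k * x2 k) = 0" using su[of x2] unfolding B_def by (simp add: d4)
  show False
    by (rule GK[OF tnn s1 s2, of 1]) (use n4 u1 uk in auto)
qed

end



lemma sum_three_delta:
  fixes Z :: "nat \<Rightarrow> 'a::comm_ring_1^4"
  assumes "a \<in> S" "b \<in> S" "c \<in> S" "finite S"
  shows "(\<Sum>k\<in>S. ((if k = a then \<alpha> else 0) + (if k = b then \<beta> else 0) + (if k = c then \<gamma> else 0)) *s Z k)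
       = \<alpha> *s Z a + \<beta> *s Z b + \<gamma> *s Z c"
proof -
  have "(\<Sum>k\<in>S. ((if k = a then \<alpha> else 0) + (if k = b then \<beta> else 0) + (if k = c then \<gamma> else 0)) *s Z k)
      = (\<Sum>k\<in>S. (if k = a then \<alpha> *s Z k else 0) + (if k = b then \<beta> *s Z k else 0) + (if k = c then \<gamma> *s Z k else 0))"
    by (rule sum.cong) (auto simp: vec_eq_iff algebra_simps)
  also have "\<dots> = \<alpha> *s Z a + \<beta> *s Z b + \<gamma> *s Z c"
    using assms by (simp add: sum.distrib sum.delta)
  finally show ?thesis .
qed

context ampl begin

lemma XA_three:
  assumes "a \<in> {1..n}" "b \<in> {1..n}" "c \<in> {1..n}"
  shows "XA (\<lambda>k. (if k = a then \<alpha> else 0) + (if k = b then \<beta> else 0) + (if k = c then \<gamma> else 0))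
       = \<alpha> *s Z a + \<beta> *s Z b + \<gamma> *s Z c"
  unfolding XA_smult using sum_three_delta[OF assms] by simp

lemma suff_pos:
  assumes cycpos: "\<And>r s. cyc r s \<Longrightarrow> det4 A B (Z r) (Z s) > 0"
    and ex: "\<exists>j\<in>{2..n}. det4 A B (Z 1) (Z j) < 0"
  shows "pl A B \<in> amplituhedron n Z"
proof -
  define s where "s j = det4 A B (Z 1) (Z j)" for j
  have s2: "s 2 > 0" using cycpos[OF cyc_12] unfolding s_def .
  have sn: "s n > 0" using cycpos[OF cyc_1n] unfolding s_def .
  define c0 where "c0 = (LEAST j. 2 \<le> j \<and> j \<le> n \<and> s j < 0)"
  have exc: "\<exists>j. 2 \<le> j \<and> j \<le> n \<and> s j < 0" using ex unfolding s_def by auto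
  have c0: "2 \<le> c0 \<and> c0 \<le> n \<and> s c0 < 0" unfolding c0_def by (rule LeastI_ex[OF exc])
  have c0min: "\<And>j. j < c0 \<Longrightarrow> \<not> (2 \<le> j \<and> j \<le> n \<and> s j < 0)"
    unfolding c0_def by (rule not_less_Least)
  have c03: "3 \<le> c0" using c0 s2 by (cases "c0 = 2") auto
  have c0n: "c0 < n" using c0 sn by (cases "c0 = n") auto
  define i where "i = c0 - 1"
  have i2: "2 \<le> i" and ic0: "i + 1 = c0" using c03 unfolding i_def by auto
  have si: "s i \<ge> 0" using c0min[of i] ic0 c0 i2 by auto
  have si1: "s (i+1) < 0" using c0 ic0 by simp
  define d0 where "d0 = (LEAST j. c0 < j \<and> j \<le> n \<and> s j > 0)"
  have exd: "\<exists>j. c0 < j \<and> j \<le> n \<and> s j > 0" using c0n sn by auto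
  have d0: "c0 < d0 \<and> d0 \<le> n \<and> s d0 > 0" unfolding d0_def by (rule LeastI_ex[OF exd])
  have d0min: "\<And>j. j < d0 \<Longrightarrow> \<not> (c0 < j \<and> j \<le> n \<and> s j > 0)"
    unfolding d0_def by (rule not_less_Least)
  define j where "j = d0 - 1"
  have jc: "i + 1 \<le> j" and jd: "j + 1 = d0" using d0 ic0 unfolding j_def by auto
  have jn: "j + 1 \<le> n" using d0 jd by simp
  have sj: "s j \<le> 0"
  proof (cases "j = c0")
    case True then show ?thesis using c0 by simp
  next
    case False then have "c0 < j" using jc ic0 by simp
    then show ?thesis using d0min[of j] jd jn by auto
  qed
  have sj1: "s (j+1) > 0" using d0 jd by simp
  have sji: "j = i + 1 \<Longrightarrow> s j < 0" using si1 by simp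
  define \<alpha> where "\<alpha> = det4 A B (Z i) (Z (i+1))"
  define \<beta> where "\<beta> = - s (i+1)"
  define \<gamma> where "\<gamma> = s i"
  define \<alpha>' where "\<alpha>' = det4 A B (Z j) (Z (j+1))"
  define \<delta> where "\<delta> = - s (j+1)"
  define \<epsilon> where "\<epsilon> = s j"
  have al: "\<alpha> > 0" unfolding \<alpha>_def using cycpos[OF cyc_succ[of i]] i2 c0n ic0 by auto
  have be: "\<beta> > 0" unfolding \<beta>_def using si1 by simp
  have ga: "\<gamma> \<ge> 0" unfolding \<gamma>_def using si by simp
  have al': "\<alpha>' > 0" unfolding \<alpha>'_def using cycpos[OF cyc_succ[of j]] jc jn i2 by auto
  have de: "\<delta> < 0" unfolding \<delta>_def using sj1 by simp
  have ep: "\<epsilon> \<le> 0" unfolding \<epsilon>_def using sj by simp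
  define x1 where "x1 k = (if k = 1 then \<alpha> else 0) + (if k = i then \<beta> else 0) + (if k = i+1 then \<gamma> else 0)" for k
  define x2 where "x2 k = (if k = 1 then \<alpha>' else 0) + (if k = j then \<delta> else 0) + (if k = j+1 then \<epsilon> else 0)" for k
  define v1 where "v1 = \<alpha> *s Z 1 + \<beta> *s Z i + \<gamma> *s Z (i+1)"
  define v2 where "v2 = \<alpha>' *s Z 1 + \<delta> *s Z j + \<epsilon> *s Z (j+1)"
  have XA1: "XA x1 = v1" unfolding x1_def v1_def
    by (rule XA_three) (use i2 c0n ic0 n4 in auto)
  have XA2: "XA x2 = v2" unfolding x2_def v2_def
    by (rule XA_three) (use jc jn i2 n4 in auto)
  define a1 where "a1 = - det4 B (Z 1) (Z i) (Z (i+1))"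
  define b1 where "b1 = det4 A (Z 1) (Z i) (Z (i+1))"
  define a2 where "a2 = - det4 B (Z 1) (Z j) (Z (j+1))"
  define b2 where "b2 = det4 A (Z 1) (Z j) (Z (j+1))"
  have v1AB: "v1 = a1 *s A + b1 *s B"
    using cramer5[of B "Z 1" "Z i" "Z (i+1)" A]
    unfolding v1_def a1_def b1_def \<alpha>_def \<beta>_def \<gamma>_def s_def vec_eq_iff
    by (auto simp: algebra_simps)
  have v2AB: "v2 = a2 *s A + b2 *s B"
    using cramer5[of B "Z 1" "Z j" "Z (j+1)" A]
    unfolding v2_def a2_def b2_def \<alpha>'_def \<delta>_def \<epsilon>_def s_def vec_eq_iff
    by (auto simp: algebra_simps)
  define c where "c = a1 * b2 - b1 * a2"
  have plv: "pl v1 v2 = c *s pl A B" unfolding v1AB v2AB c_def by (rule pl_comb)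
  have dval: "det4 v1 v2 (Z 1) (Z (i+1)) = \<beta> * (\<delta> * det4 (Z i) (Z j) (Z 1) (Z (i+1)) + \<epsilon> * det4 (Z i) (Z (j+1)) (Z 1) (Z (i+1)))"
    unfolding v1_def v2_def by (simp add: d4 algebra_simps)
  have dnz: "det4 v1 v2 (Z 1) (Z (i+1)) \<noteq> 0"
  proof (cases "j = i + 1")
    case True
    have eq: "\<sigma> * det4 v1 v2 (Z 1) (Z (i+1)) = \<beta> * (- \<epsilon>) * (\<sigma> * det4 (Z 1) (Z i) (Z (i+1)) (Z (i+2)))"
      unfolding dval using True det4_perm_c[of "Z i" "Z (i+2)" "Z 1" "Z (i+1)"] by (simp add: d4 algebra_simps)
    have X: "\<sigma> * det4 (Z 1) (Z i) (Z (i+1)) (Z (i+2)) > 0"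
      using tp[of 1 i "i+1" "i+2"] i2 jn True by auto
    have "\<epsilon> < 0" unfolding \<epsilon>_def using sji True by simp
    then have "\<beta> * (- \<epsilon>) > 0" using be by (simp add: mult_pos_neg)
    then have "\<sigma> * det4 v1 v2 (Z 1) (Z (i+1)) > 0"
      unfolding eq using X by (rule mult_pos_pos)
    then show ?thesis by auto
  next
    case False
    then have jg: "i + 1 < j" using jc by simp
    have e1: "det4 (Z i) (Z j) (Z 1) (Z (i+1)) = - det4 (Z 1) (Z i) (Z (i+1)) (Z j)"
      by (rule det4_perm_c)
    have e2: "det4 (Z i) (Z (j+1)) (Z 1) (Z (i+1)) = - det4 (Z 1) (Z i) (Z (i+1)) (Z (j+1))"
      by (rule det4_perm_c)
    have t1: "\<sigma> * det4 (Z 1) (Z i) (Z (i+1)) (Z j) > 0"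
      using tp[of 1 i "i+1" j] i2 jg jn by auto
    have t2: "\<sigma> * det4 (Z 1) (Z i) (Z (i+1)) (Z (j+1)) > 0"
      using tp[of 1 i "i+1" "j+1"] i2 jg jn by auto
    have "\<sigma> * det4 v1 v2 (Z 1) (Z (i+1)) =
        \<beta> * ((- \<delta>) * (\<sigma> * det4 (Z 1) (Z i) (Z (i+1)) (Z j)) + (- \<epsilon>) * (\<sigma> * det4 (Z 1) (Z i) (Z (i+1)) (Z (j+1))))"
      unfolding dval e1 e2 by (simp add: algebra_simps)
    also have "\<dots> > 0"
    proof -
      have "(- \<delta>) * (\<sigma> * det4 (Z 1) (Z i) (Z (i+1)) (Z j)) > 0"
        by (rule mult_pos_pos) (use de t1 in auto)
      moreover have "(- \<epsilon>) * (\<sigma> * det4 (Z 1) (Z i) (Z (i+1)) (Z (j+1))) \<ge> 0"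
        by (rule mult_nonneg_nonneg) (use ep t2 in auto)
      ultimately show ?thesis using be by (intro mult_pos_pos) auto
    qed
    finally show ?thesis by auto
  qed
  have cnz: "c \<noteq> 0"
  proof
    assume "c = 0"
    then have "pl v1 v2 = 0" using plv by simp
    then have "det4 v1 v2 (Z 1) (Z (i+1)) = 0" by (simp add: det4_pl brk_zero)
    then show False using dnz by simp
  qed
  define x1' where "x1' k = x1 k / c" for k
  have XA1': "XA x1' = (1/c) *s v1"
    unfolding XA_smult x1'_def XA1[symmetric] by (simp add: vec_eq_iff sum_distrib_left sum_divide_distrib)
  have plAB: "pl (XA x1') (XA x2) = pl A B"
    unfolding XA1' XA2 pl_smult1 plv using cnz by (simp add: vec_eq_iff)
  have x1nn: "x1 k \<ge> 0" for k unfolding x1_def using al be ga by auto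
  have x1z: "x1 l = 0" if "l > i + 1" for l unfolding x1_def using that i2 by auto
  have x2_1: "x2 1 = \<alpha>'" unfolding x2_def using jc i2 by auto
  have x2np: "x2 k \<le> 0" if "k \<noteq> 1" for k unfolding x2_def using that de ep by auto
  have x2nz: "j \<le> k" if "k \<noteq> 1" "x2 k \<noteq> 0" for k
    using that unfolding x2_def by (auto split: if_splits)
  have mnp: "minor2 x1 x2 k l \<le> 0" if kl: "1 \<le> k" "k < l" "l \<le> n" for k l
  proof -
    have a: "x1 k * x2 l \<le> 0" using x1nn[of k] x2np[of l] kl by (simp add: mult_nonneg_nonpos)
    have b: "x1 l * x2 k \<ge> 0"
    proof (cases "k = 1")
      case True then show ?thesis using x1nn[of l] x2_1 al' by simp
    next
      case False
      show ?thesis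
      proof (cases "x2 k = 0")
        case True then show ?thesis by simp
      next
        case False': False
        have "j \<le> k" using x2nz[OF False False'] .
        then have "x1 l = 0" using x1z[of l] kl jc by simp
        then show ?thesis by simp
      qed
    qed
    show ?thesis unfolding minor2_def using a b by simp
  qed
  have m1i: "minor2 x1 x2 1 i = - (\<beta> * \<alpha>')"
    unfolding minor2_def x1_def x2_def using i2 jc by auto
  have m1i_neg: "minor2 x1 x2 1 i < 0" unfolding m1i using be al' by simp
  have mscale: "minor2 x1' x2 k l = minor2 x1 x2 k l / c" for k l
    unfolding minor2_def x1'_def using cnz by (simp add: field_simps)
  have tnn: "TNN2 n x1' x2"
    unfolding TNN2_def
  proof
    show "\<exists>i j. 1 \<le> i \<and> i < j \<and> j \<le> n \<and> minor2 x1' x2 i j \<noteq> 0"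
      using m1i_neg cnz i2 c0n ic0 by (intro exI[of _ 1] exI[of _ i]) (auto simp: mscale)
    show "(\<forall>i j. 1 \<le> i \<and> i < j \<and> j \<le> n \<longrightarrow> 0 \<le> minor2 x1' x2 i j) \<or>
          (\<forall>i j. 1 \<le> i \<and> i < j \<and> j \<le> n \<longrightarrow> minor2 x1' x2 i j \<le> 0)"
    proof (cases "c > 0")
      case True
      then show ?thesis using mnp by (auto simp: mscale divide_nonpos_pos)
    next
      case False
      then have "c < 0" using cnz by simp
      then show ?thesis using mnp by (auto simp: mscale divide_nonpos_neg)
    qed
  qed
  have plnz: "pl A B \<noteq> 0"
  proof
    assume "pl A B = 0"
    then have "det4 A B (Z 1) (Z 2) = 0" by (simp add: det4_pl brk_zero)
    then show False using cycpos[OF cyc_12] by simp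
  qed
  show ?thesis unfolding ampl_eq using tnn plAB plnz by (metis (mono_tags, lifting) mem_Collect_eq)
qed

end



lemma continuous_on_brk: "continuous_on UNIV (\<lambda>p::real^6. brk p C D)"
  unfolding brk_def Let_def by (intro continuous_intros)

context ampl begin

lemma ampl_neg: "p \<in> amplituhedron n Z \<Longrightarrow> - p \<in> amplituhedron n Z"
proof -
  assume "p \<in> amplituhedron n Z"
  then obtain x1 x2 where p: "p = pl (XA x1) (XA x2)" and tnn: "TNN2 n x1 x2" and nz: "p \<noteq> 0"
    unfolding ampl_eq by blast
  define y where "y k = - x1 k" for k
  have XAy: "XA y = (-1) *s XA x1" unfolding XA_smult y_def by (simp add: vec_eq_iff sum_negf)
  have e: "pl (XA y) (XA x2) = - p" unfolding XAy pl_smult1 p by (simp add: vec_eq_iff)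
  have my: "minor2 y x2 i j = - minor2 x1 x2 i j" for i j unfolding minor2_def y_def by simp
  have "TNN2 n y x2" using tnn unfolding TNN2_def my by (auto simp: neg_le_0_iff_le)
  then show "- p \<in> amplituhedron n Z" unfolding ampl_eq using e nz by (metis (mono_tags, lifting) mem_Collect_eq neg_equal_0_iff_equal)
qed

lemma suff:
  assumes tau: "\<tau> = 1 \<or> \<tau> = -1"
    and cycpos: "\<And>r s. cyc r s \<Longrightarrow> \<tau> * det4 A B (Z r) (Z s) > 0"
    and ex: "\<exists>j\<in>{2..n}. \<tau> * det4 A B (Z 1) (Z j) < 0"
  shows "pl A B \<in> amplituhedron n Z"
  using tau
proof
  assume "\<tau> = 1"
  then show ?thesis using suff_pos[of A B] cycpos ex by auto
next
  assume t: "\<tau> = -1"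
  have "pl B A \<in> amplituhedron n Z"
  proof (rule suff_pos)
    show "det4 B A (Z r) (Z s) > 0" if "cyc r s" for r s
      using cycpos[OF that] t det4_swap12[of B A] by simp
    show "\<exists>j\<in>{2..n}. det4 B A (Z 1) (Z j) < 0"
      using ex t det4_swap12[of B A] by simp
  qed
  from ampl_neg[OF this] show ?thesis using pl_antisym[of B A] by simp
qed

definition Gset :: "(real^6) set" where
  "Gset = {p. \<exists>\<tau>\<in>{1,-1}. (\<forall>r s. cyc r s \<longrightarrow> \<tau> * brk p (Z r) (Z s) > 0) \<and>
                          (\<exists>j\<in>{2..n}. \<tau> * brk p (Z 1) (Z j) < 0)}"

lemma cyc_finite: "finite {(r, s). cyc r s}"
proof -
  have "{(r, s). cyc r s} \<subseteq> {1..n} \<times> {1..n}" unfolding cyc_def using n4 by auto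
  then show ?thesis by (rule finite_subset) simp
qed

lemma open_Gset: "open Gset"
proof -
  have "Gset = (\<Union>\<tau>\<in>{1,-1}. (\<Inter>rs\<in>{(r, s). cyc r s}. {p. \<tau> * brk p (Z (fst rs)) (Z (snd rs)) > 0})
                     \<inter> (\<Union>j\<in>{2..n}. {p. \<tau> * brk p (Z 1) (Z j) < 0}))"
    unfolding Gset_def by auto
  also have "open \<dots>"
  proof (intro open_UN ballI open_Int open_INT cyc_finite)
    fix \<tau> :: real and rs :: "nat \<times> nat" and j
    show "open {p. \<tau> * brk p (Z (fst rs)) (Z (snd rs)) > 0}"
      by (intro open_Collect_less continuous_on_mult continuous_on_const continuous_on_brk)
    show "open {p. \<tau> * brk p (Z 1) (Z j) < 0}"
      by (intro open_Collect_less continuous_on_mult continuous_on_const continuous_on_brk)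
  qed
  finally show ?thesis .
qed

lemma interior_point:
  assumes pA: "p \<in> amplituhedron n Z"
    and nz: "\<And>r s. cyc r s \<Longrightarrow> brk p (Z r) (Z s) \<noteq> 0"
  shows "p \<in> (top_of_set GrR) interior_of (amplituhedron n Z)"
proof -
  obtain \<rho> :: real where rho: "\<rho> = 1 \<or> \<rho> = -1" and rs: "\<And>r s. cyc r s \<Longrightarrow> \<rho> * brk p (Z r) (Z s) \<ge> 0"
    using A_sign[OF pA] by blast
  have rpos: "\<rho> * brk p (Z r) (Z s) > 0" if "cyc r s" for r s
    using rs[OF that] nz[OF that] rho by (auto simp: less_le)
  obtain x1 x2 where p: "p = pl (XA x1) (XA x2)" and tnn: "TNN2 n x1 x2"
    using pA unfolding ampl_eq by blast
  have "\<exists>j\<in>{2..n}. \<rho> * det4 (XA x1) (XA x2) (Z 1) (Z j) < 0"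
    by (rule nec[OF tnn rho]) (use rpos in \<open>simp add: p det4_pl\<close>)
  then have pG: "p \<in> Gset" unfolding Gset_def using rho rpos by (auto simp: p det4_pl)
  have sub: "GrR \<inter> Gset \<subseteq> amplituhedron n Z"
  proof
    fix q assume q: "q \<in> GrR \<inter> Gset"
    then obtain A B where qAB: "q = pl A B" unfolding GrR_def by blast
    from q obtain \<tau> where tau: "\<tau> = 1 \<or> \<tau> = -1"
      and c1: "\<And>r s. cyc r s \<Longrightarrow> \<tau> * brk q (Z r) (Z s) > 0"
      and c2: "\<exists>j\<in>{2..n}. \<tau> * brk q (Z 1) (Z j) < 0"
      unfolding Gset_def by blast
    show "q \<in> amplituhedron n Z" unfolding qAB
      by (rule suff[OF tau]) (use c1 c2 in \<open>simp_all add: qAB det4_pl\<close>)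
  qed
  have pGr: "p \<in> GrR" using pA unfolding ampl_eq GrR_def by blast
  have "openin (top_of_set GrR) (GrR \<inter> Gset)" using open_Gset by blast
  then show ?thesis unfolding interior_of_def using pG pGr sub by blast
qed

lemma boundary_sub:
  assumes "p \<in> euclid_boundary (amplituhedron n Z)"
  shows "\<exists>r s. cyc r s \<and> brk p (Z r) (Z s) = 0"
  using assms interior_point unfolding euclid_boundary_def by blast

end



lemma cvec_add: "cvec (a + b) = cvec a + cvec b"
  unfolding cvec_def by (simp add: vec_eq_iff)
lemma cvec_nth: "cvec v $ i = complex_of_real (v $ i)"
  unfolding cvec_def by simp
lemma cvec_pl: "pl (cvec A) (cvec B) = cvec (pl A B)"
  unfolding pl_def Let_def vec_eq_iff forall_6 by (simp add: cvec_nth)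
lemma cvec_det4: "det4 (cvec a) (cvec b) (cvec c) (cvec d) = complex_of_real (det4 a b c d)"
  unfolding det4_expand by (simp add: cvec_nth)
lemma cvec_brk: "brk (cvec p) (cvec C) (cvec D) = complex_of_real (brk p C D)"
  unfolding brk_def Let_def cvec_pl by (simp add: cvec_nth)
lemma cvec_eq0: "cvec p = 0 \<longleftrightarrow> p = 0"
  unfolding cvec_def by (simp add: vec_eq_iff)
lemma cvec_smult: "cvec (c *s v) = complex_of_real c *s cvec v"
  unfolding cvec_def by (simp add: vec_eq_iff)

lemma bracket_section_eq:
  "bracket_section Z i j = {q \<in> GrC. brk q (cvec (Z i)) (cvec (Z j)) = 0}"
  unfolding bracket_section_def GrC_def by (auto simp: det4_pl)

lemma GrC_cvec: "p \<in> GrR \<Longrightarrow> cvec p \<in> GrC"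
proof -
  assume "p \<in> GrR"
  then obtain A B where p: "p = pl A B" "pl A B \<noteq> 0" unfolding GrR_def by blast
  have "cvec p = pl (cvec A) (cvec B)" "pl (cvec A) (cvec B) \<noteq> 0" using p cvec_pl cvec_eq0 by auto
  then show "cvec p \<in> GrC" unfolding GrC_def by blast
qed

lemma pf_diff: "f \<in> poly_fun \<Longrightarrow> g \<in> poly_fun \<Longrightarrow> (\<lambda>p. f p - g p) \<in> poly_fun"
proof -
  assume f: "f \<in> poly_fun" and g: "g \<in> poly_fun"
  have "(\<lambda>p. f p + (\<lambda>p. -1) p * g p) \<in> poly_fun"
    by (intro pf_add pf_mult f g pf_const)
  then show ?thesis by simp
qed

lemma brk_poly: "(\<lambda>p. brk p C D) \<in> poly_fun"
  unfolding brk_def Let_def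
  by (intro pf_add pf_diff pf_mult pf_coord pf_const)

lemma prod_poly: "finite S \<Longrightarrow> (\<forall>x\<in>S. f x \<in> poly_fun) \<Longrightarrow> (\<lambda>p. \<Prod>x\<in>S. f x p) \<in> poly_fun"
proof (induction S rule: finite_induct)
  case empty then show ?case using pf_const[of 1] by simp
next
  case (insert x F)
  then have "(\<lambda>p. f x p * (\<Prod>x\<in>F. f x p)) \<in> poly_fun" by (intro pf_mult) auto
  then show ?case using insert by simp
qed

lemma zc_lower: "zariski_closed_Gr T \<Longrightarrow> S \<subseteq> T \<Longrightarrow> zariski_closure_Gr S \<subseteq> T"
  unfolding zariski_closure_Gr_def by blast

context ampl begin

definition Ubound :: "(complex^6) set" where
  "Ubound = {q \<in> GrC. \<exists>r s. cyc r s \<and> brk q (cvec (Z r)) (cvec (Z s)) = 0}"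

lemma Ubound_eq: "(\<Union>i\<in>{1..n-1}. bracket_section Z i (i+1)) \<union> bracket_section Z 1 n = Ubound"
proof
  show "(\<Union>i\<in>{1..n-1}. bracket_section Z i (i+1)) \<union> bracket_section Z 1 n \<subseteq> Ubound"
  proof
    fix q assume "q \<in> (\<Union>i\<in>{1..n-1}. bracket_section Z i (i+1)) \<union> bracket_section Z 1 n"
    then consider i where "i \<in> {1..n-1}" "q \<in> bracket_section Z i (i+1)" | "q \<in> bracket_section Z 1 n" by blast
    then show "q \<in> Ubound"
    proof cases
      case 1
      then have "cyc i (i+1)" using n4 unfolding cyc_def by auto
      then show ?thesis using 1 unfolding Ubound_def bracket_section_eq by blast
    next
      case 2
      then show ?thesis using cyc_1n unfolding Ubound_def bracket_section_eq by blast
    qed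
  qed
  show "Ubound \<subseteq> (\<Union>i\<in>{1..n-1}. bracket_section Z i (i+1)) \<union> bracket_section Z 1 n"
    unfolding Ubound_def bracket_section_eq cyc_def by auto
qed

definition Fprod :: "complex^6 \<Rightarrow> complex" where
  "Fprod q = (\<Prod>rs\<in>{(r, s). cyc r s}. brk q (cvec (Z (fst rs))) (cvec (Z (snd rs))))"

lemma Fprod_homog: "homog_poly Fprod"
  unfolding homog_poly_def
proof
  show "Fprod \<in> poly_fun" unfolding Fprod_def
    by (rule prod_poly[OF cyc_finite]) (simp add: brk_poly)
  show "\<exists>d. \<forall>c p. Fprod (c *s p) = c ^ d * Fprod p"
    by (rule exI[of _ "card {(r, s). cyc r s}"])
       (simp add: Fprod_def brk_smult prod.distrib)
qed

lemma Ubound_closed: "zariski_closed_Gr Ubound"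
  unfolding zariski_closed_Gr_def
proof (intro exI[of _ "{Fprod}"] conjI)
  show "\<forall>f\<in>{Fprod}. homog_poly f" using Fprod_homog by simp
  show "Ubound = {p \<in> GrC. \<forall>f\<in>{Fprod}. f p = 0}"
    unfolding Ubound_def Fprod_def using cyc_finite by (auto simp: prod_zero_iff)
qed

lemma bdry_in_Ubound: "cvec ` euclid_boundary (amplituhedron n Z) \<subseteq> Ubound"
proof
  fix q assume "q \<in> cvec ` euclid_boundary (amplituhedron n Z)"
  then obtain p where q: "q = cvec p" and pb: "p \<in> euclid_boundary (amplituhedron n Z)" by blast
  have pA: "p \<in> amplituhedron n Z" using pb unfolding euclid_boundary_def by blast
  have "p \<in> GrR" using pA unfolding ampl_eq GrR_def by blast
  then have "q \<in> GrC" using q GrC_cvec by simp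
  moreover obtain r s where "cyc r s" "brk p (Z r) (Z s) = 0" using boundary_sub[OF pb] by blast
  ultimately show "q \<in> Ubound" unfolding Ubound_def q using cvec_brk by fastforce
qed

lemma alg_bdry_sub: "algebraic_boundary n Z \<subseteq> Ubound"
  unfolding algebraic_boundary_def by (rule zc_lower[OF Ubound_closed bdry_in_Ubound])

end



definition sep_poly :: "((nat \<Rightarrow> complex) \<Rightarrow> complex) \<Rightarrow> bool" where
  "sep_poly h \<longleftrightarrow> (\<forall>t m. \<exists>p. \<forall>s. h (t(m := s)) = poly p s)"

lemma sep_const: "sep_poly (\<lambda>t. c)"
  unfolding sep_poly_def by (intro allI exI[of _ "[:c:]"]) simp

lemma sep_var: "sep_poly (\<lambda>t. t k)"
  unfolding sep_poly_def
proof (intro allI)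
  fix t :: "nat \<Rightarrow> complex" and m
  show "\<exists>p. \<forall>s. (t(m := s)) k = poly p s"
  proof (cases "m = k")
    case True then show ?thesis by (intro exI[of _ "[:0, 1:]"]) simp
  next
    case False then show ?thesis by (intro exI[of _ "[:t k:]"]) simp
  qed
qed

lemma sep_add: "sep_poly f \<Longrightarrow> sep_poly g \<Longrightarrow> sep_poly (\<lambda>t. f t + g t)"
  unfolding sep_poly_def
proof (intro allI)
  fix t :: "nat \<Rightarrow> complex" and m
  assume f: "\<forall>t m. \<exists>p. \<forall>s. f (t(m := s)) = poly p s" and g: "\<forall>t m. \<exists>p. \<forall>s. g (t(m := s)) = poly p s"
  obtain p where p: "\<forall>s. f (t(m := s)) = poly p s" using f by blast
  obtain q where q: "\<forall>s. g (t(m := s)) = poly q s" using g by blast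
  show "\<exists>r. \<forall>s. f (t(m := s)) + g (t(m := s)) = poly r s"
    by (intro exI[of _ "p + q"]) (simp add: p q)
qed

lemma sep_mult: "sep_poly f \<Longrightarrow> sep_poly g \<Longrightarrow> sep_poly (\<lambda>t. f t * g t)"
  unfolding sep_poly_def
proof (intro allI)
  fix t :: "nat \<Rightarrow> complex" and m
  assume f: "\<forall>t m. \<exists>p. \<forall>s. f (t(m := s)) = poly p s" and g: "\<forall>t m. \<exists>p. \<forall>s. g (t(m := s)) = poly p s"
  obtain p where p: "\<forall>s. f (t(m := s)) = poly p s" using f by blast
  obtain q where q: "\<forall>s. g (t(m := s)) = poly q s" using g by blast
  show "\<exists>r. \<forall>s. f (t(m := s)) * g (t(m := s)) = poly r s"
    by (intro exI[of _ "p * q"]) (simp add: p q)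
qed

lemma sep_diff: "sep_poly f \<Longrightarrow> sep_poly g \<Longrightarrow> sep_poly (\<lambda>t. f t - g t)"
proof -
  assume "sep_poly f" "sep_poly g"
  then have "sep_poly (\<lambda>t. f t + (\<lambda>t. -1) t * g t)" by (intro sep_add sep_mult sep_const)
  then show ?thesis by simp
qed

lemma sep_comp:
  assumes "f \<in> poly_fun" and G: "\<And>i. sep_poly (\<lambda>t. G t $ i)"
  shows "sep_poly (\<lambda>t. f (G t))"
  using assms(1)
proof induction
  case (pf_const c) then show ?case by (rule sep_const)
next
  case (pf_coord i) then show ?case by (rule G)
next
  case (pf_add f g) then show ?case by (intro sep_add) auto
next
  case (pf_mult f g) then show ?case by (intro sep_mult) auto
qed

lemma sep_vanish:
  assumes h: "sep_poly h" and lohi: "\<And>m. m < N \<Longrightarrow> lo m < hi m"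
    and z: "\<And>t. (\<forall>m<N. t m \<in> complex_of_real ` {lo m<..<hi m}) \<Longrightarrow> h t = 0"
  shows "h t = 0"
proof -
  have "\<forall>t. (\<forall>m. K \<le> m \<and> m < N \<longrightarrow> t m \<in> complex_of_real ` {lo m<..<hi m}) \<longrightarrow> h t = 0" if "K \<le> N" for K
    using that
  proof (induction K)
    case 0 then show ?case using z by auto
  next
    case (Suc K)
    show ?case
    proof (intro allI impI)
      fix t :: "nat \<Rightarrow> complex"
      assume tc: "\<forall>m. Suc K \<le> m \<and> m < N \<longrightarrow> t m \<in> complex_of_real ` {lo m<..<hi m}"
      obtain p where p: "\<forall>s. h (t(K := s)) = poly p s" using h unfolding sep_poly_def by blast
      have roots: "complex_of_real ` {lo K<..<hi K} \<subseteq> {x. poly p x = 0}"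
      proof
        fix x assume x: "x \<in> complex_of_real ` {lo K<..<hi K}"
        have "h (t(K := x)) = 0"
          using Suc.IH[rule_format, of "t(K := x)"] Suc.prems tc x by auto
        then show "x \<in> {x. poly p x = 0}" using p by simp
      qed
      have "infinite (complex_of_real ` {lo K<..<hi K})"
      proof
        assume "finite (complex_of_real ` {lo K<..<hi K})"
        then have "finite {lo K<..<hi K}" by (rule finite_imageD) (simp add: inj_on_def)
        then show False using infinite_Ioo[of "lo K" "hi K"] lohi[of K] Suc.prems by auto
      qed
      then have "p = 0" using roots poly_roots_finite finite_subset by blast
      then show "h t = 0" using p[rule_format, of "t K"] by simp
    qed
  qed
  from this[OF order_refl] show ?thesis by auto
qed




definition psi :: "'a::comm_ring_1^4 \<Rightarrow> 'a^4 \<Rightarrow> 'a^4 \<Rightarrow> 'a^4 \<Rightarrow> (nat \<Rightarrow> 'a) \<Rightarrow> 'a^6" where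
  "psi P Q R S t = pl (t 0 *s P + t 1 *s Q) (t 2 *s P + t 3 *s Q + t 4 *s R + t 5 *s S)"

lemma pl_comp: "\<exists>a b. \<forall>A B. pl A B $ m = A$a * B$b - A$b * B$a"
proof -
  have "m = 1 \<or> m = 2 \<or> m = 3 \<or> m = 4 \<or> m = 5 \<or> m = 6" by (rule exhaust_6)
  then show ?thesis
  proof (elim disjE)
    assume "m = 1" then show ?thesis by (intro exI[of _ 1] exI[of _ 2]) (simp add: pl_def algebra_simps)
  next
    assume "m = 2" then show ?thesis by (intro exI[of _ 1] exI[of _ 3]) (simp add: pl_def algebra_simps)
  next
    assume "m = 3" then show ?thesis by (intro exI[of _ 1] exI[of _ 4]) (simp add: pl_def algebra_simps)
  next
    assume "m = 4" then show ?thesis by (intro exI[of _ 2] exI[of _ 3]) (simp add: pl_def algebra_simps)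
  next
    assume "m = 5" then show ?thesis by (intro exI[of _ 2] exI[of _ 4]) (simp add: pl_def algebra_simps)
  next
    assume "m = 6" then show ?thesis by (intro exI[of _ 3] exI[of _ 4]) (simp add: pl_def algebra_simps)
  qed
qed

lemma sep_psi: "sep_poly (\<lambda>t. psi (P::complex^4) Q R S t $ m)"
proof -
  obtain a b where ab: "\<And>A B :: complex^4. pl A B $ m = A$a * B$b - A$b * B$a" using pl_comp by blast
  show ?thesis unfolding psi_def ab
    by (simp only: vector_add_component vector_smult_component) (intro sep_diff sep_mult sep_add sep_var sep_const)
qed

lemma surj_param:
  fixes A B P Q R S :: "'a::field^4"
  assumes z: "det4 A B P Q = 0" and nz: "pl A B \<noteq> 0" and D: "det4 P Q R S \<noteq> 0"
  shows "\<exists>t. pl A B = psi P Q R S t"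
proof -
  have step1: "\<exists>a b w. pl A B = pl (a *s P + b *s Q) w"
  proof -
    have key: "det4 B P Q Y *s A + (- det4 A P Q Y) *s B = (- det4 A B Q Y) *s P + det4 A B P Y *s Q" for Y
      using cramer5[of B P Q Y A] z unfolding vec_eq_iff by (auto simp: algebra_simps)
    have gen: "\<exists>a b w. pl A B = pl (a *s P + b *s Q) w"
      if "det4 B P Q Y \<noteq> 0 \<or> det4 A P Q Y \<noteq> 0" for Y
    proof (cases "det4 B P Q Y \<noteq> 0")
      case True
      let ?l = "det4 B P Q Y" and ?m = "- det4 A P Q Y"
      have "pl (?l *s A + ?m *s B) (0 *s A + (1 / ?l) *s B) = (?l * (1 / ?l) - ?m * 0) *s pl A B"
        by (rule pl_comb)
      then have "pl A B = pl (?l *s A + ?m *s B) ((1 / ?l) *s B)"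
        using True by (simp add: vec_eq_iff)
      then show ?thesis unfolding key by blast
    next
      case False
      then have m: "det4 A P Q Y \<noteq> 0" using that by simp
      let ?l = "det4 B P Q Y" and ?m = "- det4 A P Q Y"
      have "pl (?l *s A + ?m *s B) ((- 1 / ?m) *s A + 0 *s B) = (?l * 0 - ?m * (- 1 / ?m)) *s pl A B"
        by (rule pl_comb)
      then have "pl A B = pl (?l *s A + ?m *s B) ((- 1 / ?m) *s A)"
        using m by (simp add: vec_eq_iff)
      then show ?thesis unfolding key by blast
    qed
    show ?thesis
    proof (cases "det4 B P Q R \<noteq> 0 \<or> det4 A P Q R \<noteq> 0")
      case True then show ?thesis by (rule gen)
    next
      case F1: False
      show ?thesis
      proof (cases "det4 B P Q S \<noteq> 0 \<or> det4 A P Q S \<noteq> 0")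
        case True then show ?thesis by (rule gen)
      next
        case F2: False
        have "det4 P Q R S *s B = det4 B Q R S *s P - det4 B P R S *s Q"
          using cramer5[of P Q R S B] F1 F2 unfolding vec_eq_iff by (auto simp: algebra_simps)
        then have Bc: "B = (det4 B Q R S / det4 P Q R S) *s P + (- det4 B P R S / det4 P Q R S) *s Q"
          using D unfolding vec_eq_iff by (auto simp: field_simps)
        have "pl A B = pl B (- A)" unfolding pl_def Let_def vec_eq_iff forall_6 by (simp add: algebra_simps)
        then show ?thesis by (subst (asm) Bc) blast
      qed
    qed
  qed
  then obtain a b w where e: "pl A B = pl (a *s P + b *s Q) w" by blast
  let ?D = "det4 P Q R S"
  have "?D *s w = det4 w Q R S *s P - det4 w P R S *s Q + det4 w P Q S *s R - det4 w P Q R *s S"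
    using cramer5[of P Q R S w] unfolding vec_eq_iff by (auto simp: algebra_simps)
  then have wi: "?D * w $ i = det4 w Q R S * P$i - det4 w P R S * Q$i + det4 w P Q S * R$i - det4 w P Q R * S$i" for i
    by (drule_tac arg_cong[of _ _ "\<lambda>v. v $ i"]) simp
  have wc: "w = (det4 w Q R S / ?D) *s P + (- det4 w P R S / ?D) *s Q + (det4 w P Q S / ?D) *s R + (- det4 w P Q R / ?D) *s S"
  proof (unfold vec_eq_iff, rule allI)
    fix i
    have "w $ i = (det4 w Q R S * P$i - det4 w P R S * Q$i + det4 w P Q S * R$i - det4 w P Q R * S$i) / ?D"
      using wi[of i] D by (simp add: field_simps)
    moreover have "((det4 w Q R S / ?D) *s P + (- det4 w P R S / ?D) *s Q + (det4 w P Q S / ?D) *s R + (- det4 w P Q R / ?D) *s S) $ i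
       = (det4 w Q R S * P$i - det4 w P R S * Q$i + det4 w P Q S * R$i - det4 w P Q R * S$i) / ?D"
      by (simp add: add_divide_distrib diff_divide_distrib)
    ultimately show "w $ i = ((det4 w Q R S / ?D) *s P + (- det4 w P R S / ?D) *s Q + (det4 w P Q S / ?D) *s R + (- det4 w P Q R / ?D) *s S) $ i"
      by simp
  qed
  define t where "t = (\<lambda>m::nat. if m = 0 then a else if m = 1 then b else if m = 2 then det4 w Q R S / ?D
      else if m = 3 then - det4 w P R S / ?D else if m = 4 then det4 w P Q S / ?D else - det4 w P Q R / ?D)"
  have "pl A B = psi P Q R S t" unfolding psi_def t_def e by (subst wc) simp
  then show ?thesis by blast
qed




lemma psi_cvec: "psi (cvec P) (cvec Q) (cvec R) (cvec S) (\<lambda>m. complex_of_real (t m)) = cvec (psi P Q R S t)"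
  unfolding psi_def cvec_pl[symmetric] by (simp add: cvec_add cvec_smult)

lemma psi_cong: "(\<And>m. m < 6 \<Longrightarrow> t m = t' m) \<Longrightarrow> psi P Q R S t = psi P Q R S t'"
  unfolding psi_def by simp

context ampl begin

lemma section_sub:
  assumes D: "det4 (Z r) (Z s) (Z j) (Z k) \<noteq> 0"
    and lohi: "\<And>m. m < 6 \<Longrightarrow> lo m < hi m"
    and box: "\<And>t::nat\<Rightarrow>real. (\<forall>m<6. t m \<in> {lo m<..<hi m}) \<Longrightarrow>
                psi (Z r) (Z s) (Z j) (Z k) t \<in> euclid_boundary (amplituhedron n Z)"
  shows "bracket_section Z r s \<subseteq> algebraic_boundary n Z"
proof
  fix q assume q: "q \<in> bracket_section Z r s"
  have qG: "q \<in> GrC" and qb: "brk q (cvec (Z r)) (cvec (Z s)) = 0" using q unfolding bracket_section_eq by auto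
  let ?S = "cvec ` euclid_boundary (amplituhedron n Z)"
  let ?psi = "psi (cvec (Z r)) (cvec (Z s)) (cvec (Z j)) (cvec (Z k))"
  obtain t0 where qt: "q = ?psi t0"
  proof -
    obtain A B where AB: "q = pl A B" "pl A B \<noteq> 0" using qG unfolding GrC_def by blast
    have "det4 A B (cvec (Z r)) (cvec (Z s)) = 0" using qb AB by (simp add: det4_pl)
    moreover have "det4 (cvec (Z r)) (cvec (Z s)) (cvec (Z j)) (cvec (Z k)) \<noteq> 0"
      using D by (simp add: cvec_det4)
    ultimately show ?thesis using surj_param[of A B] AB that by metis
  qed
  show "q \<in> algebraic_boundary n Z"
    unfolding algebraic_boundary_def zariski_closure_Gr_def
  proof (rule InterI)
    fix T assume "T \<in> {T. zariski_closed_Gr T \<and> ?S \<subseteq> T}"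
    then have Tc: "zariski_closed_Gr T" and ST: "?S \<subseteq> T" by auto
    obtain F where F: "\<forall>f\<in>F. homog_poly f" and T: "T = {p \<in> GrC. \<forall>f\<in>F. f p = 0}"
      using Tc unfolding zariski_closed_Gr_def by blast
    have "f q = 0" if fF: "f \<in> F" for f
    proof -
      have fp: "f \<in> poly_fun" using F fF unfolding homog_poly_def by blast
      have sp: "sep_poly (\<lambda>t. f (?psi t))" by (rule sep_comp[OF fp sep_psi])
      have "f (?psi t) = 0" for t
      proof (rule sep_vanish[OF sp, of 6 lo hi])
        show "\<And>m. m < 6 \<Longrightarrow> lo m < hi m" by (rule lohi)
        fix t :: "nat \<Rightarrow> complex" assume tb: "\<forall>m<6. t m \<in> complex_of_real ` {lo m<..<hi m}"
        define t' where "t' m = Re (t m)" for m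
        have "\<forall>m<6. t m = complex_of_real (t' m)" using tb unfolding t'_def by auto
        then have e: "?psi t = cvec (psi (Z r) (Z s) (Z j) (Z k) t')"
          unfolding psi_cvec[symmetric] by (intro psi_cong) auto
        have "\<forall>m<6. t' m \<in> {lo m<..<hi m}" using tb unfolding t'_def by auto
        then have "psi (Z r) (Z s) (Z j) (Z k) t' \<in> euclid_boundary (amplituhedron n Z)" by (rule box)
        then have "?psi t \<in> T" using ST e by auto
        then show "f (?psi t) = 0" using T fF by auto
      qed
      then show ?thesis using qt by simp
    qed
    then show "q \<in> T" using T qG by auto
  qed
qed

end



context ampl begin

lemma bdry_point:
  assumes A0: "A0 = a *s Z i + b *s Z i'"
    and B0: "B0 = c1 *s Z i + c2 *s Z i' + c3 *s Z j + c4 *s Z k"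
    and cii: "cyc i i'" and cjk: "cyc j k"
    and D: "det4 (Z i) (Z i') (Z j) (Z k) \<noteq> 0"
    and c4: "c4 \<noteq> 0" and ac: "a * c2 - b * c1 \<noteq> 0"
    and pA: "pl A0 B0 \<in> amplituhedron n Z"
  shows "pl A0 B0 \<in> euclid_boundary (amplituhedron n Z)"
proof -
  let ?p0 = "pl A0 B0"
  define \<beta>0 where "\<beta>0 = (a * c2 - b * c1) * det4 (Z i) (Z i') (Z j) (Z k)"
  define \<kappa> where "\<kappa> = c4 * det4 (Z i) (Z i') (Z j) (Z k)"
  have b0: "\<beta>0 \<noteq> 0" unfolding \<beta>0_def using ac D by simp
  have k0: "\<kappa> \<noteq> 0" unfolding \<kappa>_def using c4 D by simp
  have ev1: "brk (pl (A0 + e *s Z j) B0) (Z i) (Z i') = e * \<kappa>" for e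
    unfolding det4_pl[symmetric] A0 B0 \<kappa>_def
    by (simp add: d4 det4_pairs[of "Z j" "Z k"] algebra_simps)
  have ev2: "brk (pl (A0 + e *s Z j) B0) (Z j) (Z k) = \<beta>0" for e
    unfolding det4_pl[symmetric] A0 B0 \<beta>0_def
    by (simp add: d4 det4_swap12[of "Z i'" "Z i"] algebra_simps)
  have plE: "pl (A0 + e *s Z j) B0 = ?p0 + e *\<^sub>R pl (Z j) B0" for e
    by (simp add: pl_add1 pl_smult1 scaleR_eq_smult)
  have "?p0 \<notin> (top_of_set GrR) interior_of (amplituhedron n Z)"
  proof
    assume "?p0 \<in> (top_of_set GrR) interior_of (amplituhedron n Z)"
    then obtain U where U: "openin (top_of_set GrR) U" "?p0 \<in> U" "U \<subseteq> amplituhedron n Z"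
      unfolding interior_of_def by blast
    then obtain V where V: "open V" "U = GrR \<inter> V" unfolding openin_open by blast
    obtain r where r: "r > 0" "ball ?p0 r \<subseteq> V" using V U open_contains_ball by blast
    let ?W = "pl (Z j) B0"
    define \<eta> where "\<eta> = r / (2 * (norm ?W + 1))"
    have nW: "norm ?W + 1 > 0" by (simp add: add_nonneg_pos)
    then have "2 * (norm ?W + 1) > 0" by simp
    then have eta: "\<eta> > 0" unfolding \<eta>_def using r by (intro divide_pos_pos)
    define e where "e = (if \<beta>0 * \<kappa> > 0 then - \<eta> else \<eta>)"
    have ae: "\<bar>e\<bar> = \<eta>" unfolding e_def using eta by auto
    have neg: "e * \<kappa> * \<beta>0 < 0"
    proof (cases "\<beta>0 * \<kappa> > 0")
      case True
      have "\<eta> * (\<beta>0 * \<kappa>) > 0" by (rule mult_pos_pos[OF eta True])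
      moreover have "e * \<kappa> * \<beta>0 = - (\<eta> * (\<beta>0 * \<kappa>))" unfolding e_def using True by (simp add: ac_simps)
      ultimately show ?thesis by linarith
    next
      case False
      then have "\<beta>0 * \<kappa> < 0" using b0 k0 by (simp add: less_le)
      then have "\<eta> * (\<beta>0 * \<kappa>) < 0" by (rule mult_pos_neg[OF eta])
      moreover have "e * \<kappa> * \<beta>0 = \<eta> * (\<beta>0 * \<kappa>)" unfolding e_def using False by (simp add: ac_simps)
      ultimately show ?thesis by linarith
    qed
    let ?pe = "pl (A0 + e *s Z j) B0"
    have "dist ?pe ?p0 = \<bar>e\<bar> * norm ?W" unfolding plE by (simp add: dist_norm)
    also have "\<dots> < r"
    proof -
      have "\<eta> * norm ?W < \<eta> * (norm ?W + 1)" using eta by simp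
      also have "\<dots> = r / 2" unfolding \<eta>_def using nW by (simp add: field_simps)
      finally show ?thesis using ae r by simp
    qed
    finally have "?pe \<in> V" using r by (auto simp: dist_commute)
    moreover have "?pe \<in> GrR"
    proof -
      have "?pe \<noteq> 0" using ev2[of e] b0 brk_zero by metis
      then show ?thesis unfolding GrR_def by blast
    qed
    ultimately have "?pe \<in> amplituhedron n Z" using U V by blast
    then obtain \<rho> :: real where rho: "\<rho> = 1 \<or> \<rho> = -1"
      and rs: "\<And>r s. cyc r s \<Longrightarrow> \<rho> * brk ?pe (Z r) (Z s) \<ge> 0"
      using A_sign by blast
    have "\<rho> * (e * \<kappa>) \<ge> 0" using rs[OF cii] ev1 by simp
    moreover have "\<rho> * \<beta>0 \<ge> 0" using rs[OF cjk] ev2 by simp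
    ultimately have "(\<rho> * (e * \<kappa>)) * (\<rho> * \<beta>0) \<ge> 0" by simp
    moreover have "(\<rho> * (e * \<kappa>)) * (\<rho> * \<beta>0) = e * \<kappa> * \<beta>0" using rho by auto
    ultimately show False using neg by simp
  qed
  then show ?thesis unfolding euclid_boundary_def using pA by blast
qed

end



lemma sum_two_delta:
  fixes Z :: "nat \<Rightarrow> 'a::comm_ring_1^4"
  assumes "a \<in> S" "b \<in> S" "finite S"
  shows "(\<Sum>k\<in>S. ((if k = a then \<alpha> else 0) + (if k = b then \<beta> else 0)) *s Z k) = \<alpha> *s Z a + \<beta> *s Z b"
proof -
  have "(\<Sum>k\<in>S. ((if k = a then \<alpha> else 0) + (if k = b then \<beta> else 0)) *s Z k)
      = (\<Sum>k\<in>S. (if k = a then \<alpha> *s Z k else 0) + (if k = b then \<beta> *s Z k else 0))"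
    by (rule sum.cong) (auto simp: vec_eq_iff algebra_simps)
  also have "\<dots> = \<alpha> *s Z a + \<beta> *s Z b"
    using assms by (simp add: sum.distrib sum.delta)
  finally show ?thesis .
qed

lemma sum_four_delta:
  fixes Z :: "nat \<Rightarrow> 'a::comm_ring_1^4"
  assumes "a \<in> S" "b \<in> S" "c \<in> S" "d \<in> S" "finite S"
  shows "(\<Sum>k\<in>S. ((if k = a then \<alpha> else 0) + (if k = b then \<beta> else 0) + (if k = c then \<gamma> else 0) + (if k = d then \<delta> else 0)) *s Z k)
       = \<alpha> *s Z a + \<beta> *s Z b + \<gamma> *s Z c + \<delta> *s Z d"
proof -
  have "(\<Sum>k\<in>S. ((if k = a then \<alpha> else 0) + (if k = b then \<beta> else 0) + (if k = c then \<gamma> else 0) + (if k = d then \<delta> else 0)) *s Z k)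
      = (\<Sum>k\<in>S. (if k = a then \<alpha> *s Z k else 0) + (if k = b then \<beta> *s Z k else 0) + (if k = c then \<gamma> *s Z k else 0) + (if k = d then \<delta> *s Z k else 0))"
    by (rule sum.cong) (auto simp: vec_eq_iff algebra_simps)
  also have "\<dots> = \<alpha> *s Z a + \<beta> *s Z b + \<gamma> *s Z c + \<delta> *s Z d"
    using assms by (simp add: sum.distrib sum.delta)
  finally show ?thesis .
qed

lemma TNN_adj:
  assumes i: "1 \<le> i" "i + 1 \<le> n" and ab: "a > 0" "b > 0"
    and x2n: "\<And>k. k \<le> i \<Longrightarrow> x2 k \<le> 0" and x2p: "\<And>k. i + 1 \<le> k \<Longrightarrow> x2 k \<ge> 0"
    and x2i: "x2 (i+1) > 0"
  shows "TNN2 n (\<lambda>k. (if k = i then a else 0) + (if k = i+1 then b else 0)) x2"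
proof -
  let ?x1 = "\<lambda>k. (if k = i then a else 0) + (if k = i+1 then (b::real) else 0)"
  have m: "minor2 ?x1 x2 i (i+1) > 0"
  proof -
    have "a * x2 (i+1) > 0" using ab x2i by simp
    moreover have "b * x2 i \<le> 0" using ab x2n[of i] by (simp add: mult_nonneg_nonpos)
    ultimately show ?thesis unfolding minor2_def by simp
  qed
  have nn: "minor2 ?x1 x2 k l \<ge> 0" if kl: "k < l" for k l
  proof -
    have "?x1 k * x2 l \<ge> 0"
    proof (cases "k = i \<or> k = i + 1")
      case True
      then have "x2 l \<ge> 0" using x2p[of l] kl by auto
      moreover have "?x1 k \<ge> 0" using ab by auto
      ultimately show ?thesis by simp
    next
      case False then show ?thesis by simp
    qed
    moreover have "?x1 l * x2 k \<le> 0"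
    proof (cases "l = i \<or> l = i + 1")
      case True
      then have "x2 k \<le> 0" using x2n[of k] kl by auto
      moreover have "?x1 l \<ge> 0" using ab by auto
      ultimately show ?thesis by (simp add: mult_nonneg_nonpos)
    next
      case False then show ?thesis by simp
    qed
    ultimately show ?thesis unfolding minor2_def by simp
  qed
  show ?thesis unfolding TNN2_def
  proof (intro conjI disjI1)
    show "\<exists>i' j. 1 \<le> i' \<and> i' < j \<and> j \<le> n \<and> minor2 ?x1 x2 i' j \<noteq> 0"
      using m i by (intro exI[of _ i] exI[of _ "i+1"]) auto
    show "\<forall>i j. 1 \<le> i \<and> i < j \<and> j \<le> n \<longrightarrow> 0 \<le> minor2 ?x1 x2 i j" using nn by blast
  qed
qed

lemma TNN_1n:
  assumes n1: "1 < n" and ac: "a > 0" "c < 0"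
    and x21: "x2 1 > 0" and x2n: "x2 n > 0" and x2m: "\<And>k. 1 < k \<Longrightarrow> k < n \<Longrightarrow> x2 k \<ge> 0"
  shows "TNN2 n (\<lambda>k. (if k = 1 then a else 0) + (if k = n then c else 0)) x2"
proof -
  let ?x1 = "\<lambda>k. (if k = 1 then a else 0) + (if k = n then (c::real) else 0)"
  have m: "minor2 ?x1 x2 1 n > 0"
  proof -
    have "a * x2 n > 0" using ac x2n by simp
    moreover have "c * x2 1 < 0" using ac x21 by (simp add: mult_neg_pos)
    ultimately show ?thesis unfolding minor2_def using n1 by simp
  qed
  have nn: "minor2 ?x1 x2 k l \<ge> 0" if kl: "1 \<le> k" "k < l" "l \<le> n" for k l
  proof -
    have "?x1 k * x2 l \<ge> 0"
    proof (cases "k = 1")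
      case True
      then have "x2 l \<ge> 0" using x2m[of l] x2n kl by (cases "l = n") auto
      then show ?thesis using True ac kl by simp
    next
      case False then show ?thesis using kl by simp
    qed
    moreover have "?x1 l * x2 k \<le> 0"
    proof (cases "l = n")
      case True
      then have "x2 k \<ge> 0" using x2m[of k] x21 kl by (cases "k = 1") auto
      then show ?thesis using True ac kl n1 by (simp add: mult_nonpos_nonneg)
    next
      case False then show ?thesis using kl by simp
    qed
    ultimately show ?thesis unfolding minor2_def by simp
  qed
  show ?thesis unfolding TNN2_def
  proof (intro conjI disjI1)
    show "\<exists>i j. 1 \<le> i \<and> i < j \<and> j \<le> n \<and> minor2 ?x1 x2 i j \<noteq> 0"
      using m n1 by (intro exI[of _ 1] exI[of _ n]) auto
    show "\<forall>i j. 1 \<le> i \<and> i < j \<and> j \<le> n \<longrightarrow> 0 \<le> minor2 ?x1 x2 i j" using nn by blast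
  qed
qed




context ampl begin

lemma box_adj:
  assumes i: "1 \<le> i" "i < n"
    and jk: "1 \<le> j" "j \<le> n" "1 \<le> k" "k \<le> n" "j \<noteq> i" "j \<noteq> i+1" "k \<noteq> i" "k \<noteq> i+1" "j \<noteq> k"
    and cjk: "cyc j k" and D: "det4 (Z i) (Z (i+1)) (Z j) (Z k) \<noteq> 0"
    and t: "\<forall>m<6. t m \<in> {lo m<..<hi m}"
    and lo_def: "\<And>m. lo m = (if m = 2 then -2 else if m = 4 \<and> j < i then -2 else if m = 5 \<and> k < i then -2 else 1)"
    and hi_def: "\<And>m. hi m = lo m + 1"
  shows "psi (Z i) (Z (i+1)) (Z j) (Z k) t \<in> euclid_boundary (amplituhedron n Z)"
proof -
  have tm: "lo m < t m \<and> t m < lo m + 1" if "m < 6" for m using t that hi_def by auto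
  have t0: "t 0 > 0" using tm[of 0] lo_def[of 0] by auto
  have t1: "t 1 > 0" using tm[of 1] lo_def[of 1] by auto
  have t2: "t 2 < 0" using tm[of 2] lo_def[of 2] by auto
  have t3: "t 3 > 0" using tm[of 3] lo_def[of 3] by auto
  have t4: "(j < i \<longrightarrow> t 4 < 0) \<and> (\<not> j < i \<longrightarrow> t 4 > 0)" using tm[of 4] lo_def[of 4] by auto
  have t5: "(k < i \<longrightarrow> t 5 < 0) \<and> (\<not> k < i \<longrightarrow> t 5 > 0)" using tm[of 5] lo_def[of 5] by auto
  define x1 where "x1 = (\<lambda>k'. (if k' = i then t 0 else 0) + (if k' = i+1 then t 1 else 0))"
  define x2 where "x2 = (\<lambda>k'. (if k' = i then t 2 else 0) + (if k' = i+1 then t 3 else 0) + (if k' = j then t 4 else 0) + (if k' = k then t 5 else 0))"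
  define A0 where "A0 = t 0 *s Z i + t 1 *s Z (i+1)"
  define B0 where "B0 = t 2 *s Z i + t 3 *s Z (i+1) + t 4 *s Z j + t 5 *s Z k"
  have XA1: "XA x1 = A0" unfolding XA_smult x1_def A0_def by (rule sum_two_delta) (use i in auto)
  have XA2: "XA x2 = B0" unfolding XA_smult x2_def B0_def by (rule sum_four_delta) (use i jk in auto)
  have psi_eq: "psi (Z i) (Z (i+1)) (Z j) (Z k) t = pl A0 B0" unfolding psi_def A0_def B0_def by simp
  have tnn: "TNN2 n x1 x2" unfolding x1_def
  proof (rule TNN_adj)
    show "1 \<le> i" "i + 1 \<le> n" "t 0 > 0" "t 1 > 0" using i t0 t1 by auto
    show "x2 k' \<le> 0" if "k' \<le> i" for k'
      unfolding x2_def using that t2 t4 t5 jk by (auto simp: add_nonpos_nonpos)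
    show "x2 k' \<ge> 0" if "i + 1 \<le> k'" for k'
      unfolding x2_def using that t3 t4 t5 jk by auto
    show "x2 (i+1) > 0" unfolding x2_def using t3 jk by auto
  qed
  have ac: "t 0 * t 3 - t 1 * t 2 > 0"
  proof -
    have "t 0 * t 3 > 0" using t0 t3 by simp
    moreover have "t 1 * t 2 < 0" using t1 t2 by (simp add: mult_pos_neg)
    ultimately show ?thesis by simp
  qed
  have t5nz: "t 5 \<noteq> 0" using t5 by auto
  have br: "det4 A0 B0 (Z j) (Z k) = (t 0 * t 3 - t 1 * t 2) * det4 (Z i) (Z (i+1)) (Z j) (Z k)"
    unfolding A0_def B0_def using det4_swap12[of "Z (i+1)" "Z i" "Z j" "Z k"] by (simp add: d4 algebra_simps)
  have plnz: "pl A0 B0 \<noteq> 0"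
  proof
    assume "pl A0 B0 = 0"
    then have "det4 A0 B0 (Z j) (Z k) = 0" by (simp add: det4_pl brk_zero)
    then show False using br ac D by simp
  qed
  have pA: "pl A0 B0 \<in> amplituhedron n Z"
    unfolding ampl_eq using tnn XA1 XA2 plnz by blast
  have "pl A0 B0 \<in> euclid_boundary (amplituhedron n Z)"
    by (rule bdry_point[OF A0_def B0_def cyc_succ[OF i] cjk D t5nz]) (use ac pA in auto)
  then show ?thesis unfolding psi_eq .
qed

lemma box_1n:
  assumes t: "\<forall>m<6. t m \<in> {lo m<..<hi m}"
    and lo_def: "\<And>m. lo m = (if m = 1 then -2 else 1)"
    and hi_def: "\<And>m. hi m = lo m + 1"
  shows "psi (Z 1) (Z n) (Z 2) (Z 3) t \<in> euclid_boundary (amplituhedron n Z)"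
proof -
  have tm: "lo m < t m \<and> t m < lo m + 1" if "m < 6" for m using t that hi_def by auto
  have t0: "t 0 > 0" using tm[of 0] lo_def[of 0] by auto
  have t1: "t 1 < 0" using tm[of 1] lo_def[of 1] by auto
  have t2: "t 2 > 0" using tm[of 2] lo_def[of 2] by auto
  have t3: "t 3 > 0" using tm[of 3] lo_def[of 3] by auto
  have t4: "t 4 > 0" using tm[of 4] lo_def[of 4] by auto
  have t5: "t 5 > 0" using tm[of 5] lo_def[of 5] by auto
  define x1 where "x1 = (\<lambda>k'. (if k' = 1 then t 0 else 0) + (if k' = n then t 1 else 0))"
  define x2 where "x2 = (\<lambda>k'. (if k' = 1 then t 2 else 0) + (if k' = n then t 3 else 0) + (if k' = 2 then t 4 else 0) + (if k' = 3 then t 5 else 0))"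
  define A0 where "A0 = t 0 *s Z 1 + t 1 *s Z n"
  define B0 where "B0 = t 2 *s Z 1 + t 3 *s Z n + t 4 *s Z 2 + t 5 *s Z 3"
  have XA1: "XA x1 = A0" unfolding XA_smult x1_def A0_def by (rule sum_two_delta) (use n4 in auto)
  have XA2: "XA x2 = B0" unfolding XA_smult x2_def B0_def by (rule sum_four_delta) (use n4 in auto)
  have psi_eq: "psi (Z 1) (Z n) (Z 2) (Z 3) t = pl A0 B0" unfolding psi_def A0_def B0_def by simp
  have tnn: "TNN2 n x1 x2" unfolding x1_def
  proof (rule TNN_1n)
    show "1 < n" "t 0 > 0" "t 1 < 0" using n4 t0 t1 by auto
    show "x2 1 > 0" unfolding x2_def using t2 n4 by auto
    show "x2 n > 0" unfolding x2_def using t3 n4 by auto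
    show "x2 k' \<ge> 0" if "1 < k'" "k' < n" for k'
      unfolding x2_def using that t4 t5 by auto
  qed
  have ac: "t 0 * t 3 - t 1 * t 2 > 0"
  proof -
    have "t 0 * t 3 > 0" using t0 t3 by simp
    moreover have "t 1 * t 2 < 0" using t1 t2 by (simp add: mult_neg_pos)
    ultimately show ?thesis by simp
  qed
  have t5nz: "t 5 \<noteq> 0" using t5 by auto
  have D: "det4 (Z 1) (Z n) (Z 2) (Z 3) \<noteq> 0"
  proof -
    have "\<sigma> * det4 (Z 1) (Z 2) (Z 3) (Z n) > 0" using tp[of 1 2 3 n] n4 by auto
    moreover have "det4 (Z 1) (Z n) (Z 2) (Z 3) = det4 (Z 1) (Z 2) (Z 3) (Z n)" by (rule det4_perm_a)
    ultimately show ?thesis by auto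
  qed
  have br: "det4 A0 B0 (Z 2) (Z 3) = (t 0 * t 3 - t 1 * t 2) * det4 (Z 1) (Z n) (Z 2) (Z 3)"
    unfolding A0_def B0_def using det4_swap12[of "Z n" "Z 1" "Z 2" "Z 3"] by (simp add: d4 algebra_simps)
  have plnz: "pl A0 B0 \<noteq> 0"
  proof
    assume "pl A0 B0 = 0"
    then have "det4 A0 B0 (Z 2) (Z 3) = 0" by (simp add: det4_pl brk_zero)
    then show False using br ac D by simp
  qed
  have pA: "pl A0 B0 \<in> amplituhedron n Z"
    unfolding ampl_eq using tnn XA1 XA2 plnz by blast
  have c23: "cyc 2 3" using n4 unfolding cyc_def by auto
  have "pl A0 B0 \<in> euclid_boundary (amplituhedron n Z)"
    by (rule bdry_point[OF A0_def B0_def cyc_1n c23 D t5nz]) (use ac pA in auto)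
  then show ?thesis unfolding psi_eq .
qed

end



context ampl begin

lemma sec_adj:
  assumes i: "1 \<le> i" "i < n"
    and jk: "1 \<le> j" "j \<le> n" "1 \<le> k" "k \<le> n" "j \<noteq> i" "j \<noteq> i+1" "k \<noteq> i" "k \<noteq> i+1" "j \<noteq> k"
    and cjk: "cyc j k" and D: "det4 (Z i) (Z (i+1)) (Z j) (Z k) \<noteq> 0"
  shows "bracket_section Z i (i+1) \<subseteq> algebraic_boundary n Z"
proof -
  define lo :: "nat \<Rightarrow> real" where "lo m = (if m = 2 then -2 else if m = 4 \<and> j < i then -2 else if m = 5 \<and> k < i then -2 else 1)" for m
  define hi :: "nat \<Rightarrow> real" where "hi m = lo m + 1" for m
  show ?thesis
  proof (rule section_sub[OF D, of lo hi])
    show "lo m < hi m" for m unfolding hi_def by simp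
    fix t :: "nat \<Rightarrow> real" assume "\<forall>m<6. t m \<in> {lo m<..<hi m}"
    then show "psi (Z i) (Z (i+1)) (Z j) (Z k) t \<in> euclid_boundary (amplituhedron n Z)"
      by (rule box_adj[OF i jk cjk D _ lo_def hi_def])
  qed
qed

lemma sec_1n: "bracket_section Z 1 n \<subseteq> algebraic_boundary n Z"
proof -
  define lo :: "nat \<Rightarrow> real" where "lo m = (if m = 1 then -2 else 1)" for m
  define hi :: "nat \<Rightarrow> real" where "hi m = lo m + 1" for m
  have D: "det4 (Z 1) (Z n) (Z 2) (Z 3) \<noteq> 0"
  proof -
    have "\<sigma> * det4 (Z 1) (Z 2) (Z 3) (Z n) > 0" using tp[of 1 2 3 n] n4 by auto
    moreover have "det4 (Z 1) (Z n) (Z 2) (Z 3) = det4 (Z 1) (Z 2) (Z 3) (Z n)" by (rule det4_perm_a)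
    ultimately show ?thesis by auto
  qed
  show ?thesis
  proof (rule section_sub[OF D, of lo hi])
    show "lo m < hi m" for m unfolding hi_def by simp
    fix t :: "nat \<Rightarrow> real" assume "\<forall>m<6. t m \<in> {lo m<..<hi m}"
    then show "psi (Z 1) (Z n) (Z 2) (Z 3) t \<in> euclid_boundary (amplituhedron n Z)"
      by (rule box_1n[OF _ lo_def hi_def])
  qed
qed

lemma sec_succ:
  assumes i: "1 \<le> i" "i < n"
  shows "bracket_section Z i (i+1) \<subseteq> algebraic_boundary n Z"
proof -
  consider "i + 3 \<le> n" | "i + 2 = n" | "i + 1 = n" using i by linarith
  then show ?thesis
  proof cases
    case 1
    have D: "det4 (Z i) (Z (i+1)) (Z (i+2)) (Z (i+3)) \<noteq> 0"
      using tp[of i "i+1" "i+2" "i+3"] i 1 by auto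
    have c: "cyc (i+2) (i+3)" using 1 unfolding cyc_def by auto
    show ?thesis by (rule sec_adj[OF i _ _ _ _ _ _ _ _ _ c D]) (use 1 i in auto)
  next
    case 2
    have "\<sigma> * det4 (Z 1) (Z i) (Z (i+1)) (Z n) > 0" using tp[of 1 i "i+1" n] i 2 n4 by auto
    moreover have "det4 (Z i) (Z (i+1)) (Z 1) (Z n) = det4 (Z 1) (Z i) (Z (i+1)) (Z n)" by (rule det4_perm_b)
    ultimately have D: "det4 (Z i) (Z (i+1)) (Z 1) (Z n) \<noteq> 0" by auto
    show ?thesis by (rule sec_adj[OF i _ _ _ _ _ _ _ _ _ cyc_1n D]) (use 2 i n4 in auto)
  next
    case 3
    have "\<sigma> * det4 (Z 1) (Z 2) (Z i) (Z (i+1)) > 0" using tp[of 1 2 i "i+1"] i 3 n4 by auto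
    moreover have "det4 (Z i) (Z (i+1)) (Z 1) (Z 2) = det4 (Z 1) (Z 2) (Z i) (Z (i+1))" by (rule det4_pairs)
    ultimately have D: "det4 (Z i) (Z (i+1)) (Z 1) (Z 2) \<noteq> 0" by auto
    show ?thesis by (rule sec_adj[OF i _ _ _ _ _ _ _ _ _ cyc_12 D]) (use 3 i n4 in auto)
  qed
qed

lemma main_eq:
  "algebraic_boundary n Z = (\<Union>i\<in>{1..n-1}. bracket_section Z i (i+1)) \<union> bracket_section Z 1 n"
proof
  show "algebraic_boundary n Z \<subseteq> (\<Union>i\<in>{1..n-1}. bracket_section Z i (i+1)) \<union> bracket_section Z 1 n"
    unfolding Ubound_eq by (rule alg_bdry_sub)
  show "(\<Union>i\<in>{1..n-1}. bracket_section Z i (i+1)) \<union> bracket_section Z 1 n \<subseteq> algebraic_boundary n Z"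
  proof (intro Un_least UN_least)
    fix i assume "i \<in> {1..n-1}"
    then have "1 \<le> i" "i < n" using n4 by auto
    then show "bracket_section Z i (i+1) \<subseteq> algebraic_boundary n Z" by (rule sec_succ)
  next
    show "bracket_section Z 1 n \<subseteq> algebraic_boundary n Z" by (rule sec_1n)
  qed
qed

end

theorem proposition3p1:
  fixes n :: nat and Z :: "nat \<Rightarrow> real^4"
  assumes "n \<ge> 4"
    and "totally_positive_Z n Z"
  shows "algebraic_boundary n Z =
           (\<Union>i\<in>{1..n-1}. bracket_section Z i (i+1)) \<union> bracket_section Z 1 n"
proof -
  obtain \<sigma> :: real where sig: "\<sigma> = 1 \<or> \<sigma> = -1"
    and tp: "\<And>a b c d. 1 \<le> a \<Longrightarrow> a < b \<Longrightarrow> b < c \<Longrightarrow> c < d \<Longrightarrow> d \<le> n \<Longrightarrow>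
              \<sigma> * det4 (Z a) (Z b) (Z c) (Z d) > 0"
  proof -
    from assms(2) consider
      "\<forall>a b c d. 1 \<le> a \<and> a < b \<and> b < c \<and> c < d \<and> d \<le> n \<longrightarrow> det4 (Z a) (Z b) (Z c) (Z d) > 0" |
      "\<forall>a b c d. 1 \<le> a \<and> a < b \<and> b < c \<and> c < d \<and> d \<le> n \<longrightarrow> det4 (Z a) (Z b) (Z c) (Z d) < 0"
      unfolding totally_positive_Z_def by blast
    then show ?thesis
    proof cases
      case 1 then show ?thesis using that[of 1] by auto
    next
      case 2 then show ?thesis using that[of "-1"] by auto
    qed
  qed
  interpret ampl n Z \<sigma> by unfold_locales (use assms(1) sig tp in auto)
  show ?thesis by (rule main_eq)
qed



end
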